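(* Let $D$ be a principal ideal domain, $\alpha\in D$ a prime element, $n\ge1$, and $\overline{D}:=D/(\alpha^n)$. Let $1\leqslant j\leqslant r$, let $M$ be a free $\overline{D}$-module with basis $e_1,\dots,e_r$, and let $N=\bigoplus_{i=1}^jx_i\overline{D}$ be a submodule of $M$ (an internal direct sum) with $x_i\in M$ and $\mathrm{Ann}(x_i)=(\alpha^{n_i})/(\alpha^n)\neq\overline{D}$ for $i=1,\dots,j$. Then $M/N\cong\bigoplus_{i=1}^rD/(\alpha^{n-n_i})$, where $n_i:=0$ for $j<i\leq r$. *)

theory Defs
  imports "HOL-Algebra.Algebra"
begin

definition Dbar :: "('a, 'b) ring_scheme \<Rightarrow> 'a \<Rightarrow> nat \<Rightarrow> 'a set ring" where
  "Dbar D \<alpha> n = D Quot (PIdl\<^bsub>D\<^esub> (\<alpha> [^]\<^bsub>D\<^esub> n))"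

definition is_basis :: "('s, 'c) ring_scheme \<Rightarrow> ('s, 'm, 'd) module_scheme \<Rightarrow> (nat \<Rightarrow> 'm) \<Rightarrow> nat \<Rightarrow> bool" where
  "is_basis R M e r \<longleftrightarrow> (\<forall>i\<in>{1..r}. e i \<in> carrier M) \<and>
     (\<forall>m\<in>carrier M. \<exists>!c. c \<in> {1..r} \<rightarrow>\<^sub>E carrier R \<and>
        m = (\<Oplus>\<^bsub>M\<^esub> i\<in>{1..r}. c i \<odot>\<^bsub>M\<^esub> e i))"

definition lin_span :: "('s, 'c) ring_scheme \<Rightarrow> ('s, 'm, 'd) module_scheme \<Rightarrow> (nat \<Rightarrow> 'm) \<Rightarrow> nat \<Rightarrow> 'm set" where
  "lin_span R M x j = {(\<Oplus>\<^bsub>M\<^esub> i\<in>{1..j}. c i \<odot>\<^bsub>M\<^esub> x i) | c. c \<in> {1..j} \<rightarrow> carrier R}"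

definition sum_is_direct :: "('s, 'c) ring_scheme \<Rightarrow> ('s, 'm, 'd) module_scheme \<Rightarrow> (nat \<Rightarrow> 'm) \<Rightarrow> nat \<Rightarrow> bool" where
  "sum_is_direct R M x j \<longleftrightarrow> (\<forall>c \<in> {1..j} \<rightarrow> carrier R.
      (\<Oplus>\<^bsub>M\<^esub> i\<in>{1..j}. c i \<odot>\<^bsub>M\<^esub> x i) = \<zero>\<^bsub>M\<^esub> \<longrightarrow> (\<forall>i\<in>{1..j}. c i \<odot>\<^bsub>M\<^esub> x i = \<zero>\<^bsub>M\<^esub>))"

definition Ann :: "('s, 'c) ring_scheme \<Rightarrow> ('s, 'm, 'd) module_scheme \<Rightarrow> 'm \<Rightarrow> 's set" where
  "Ann R M x = {c \<in> carrier R. c \<odot>\<^bsub>M\<^esub> x = \<zero>\<^bsub>M\<^esub>}"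

text \<open>The image I/J of an ideal I (containing J) in the quotient ring D/J.\<close>
definition quot_ideal :: "('a, 'b) ring_scheme \<Rightarrow> 'a set \<Rightarrow> 'a set \<Rightarrow> 'a set set" where
  "quot_ideal D I J = a_r_coset D J ` I"

text \<open>M/N is isomorphic, as a D-module (D acting on the Dbar-module M through
  the quotient map), to the external direct sum of the D-modules Q i, i = 1..r,
  where Q i = D/K i is given as a quotient ring of D (D acting by multiplication).
  M/N is the set of additive cosets of N, with coset addition and
  d \<cdot> (N + x) = N + (J + d) x.\<close>
definition quot_iso_dsum ::
  "('a, 'b) ring_scheme \<Rightarrow> 'a set \<Rightarrow> ('a set, 'm, 'd) module_scheme \<Rightarrow> 'm set
    \<Rightarrow> nat \<Rightarrow> (nat \<Rightarrow> 'a set) \<Rightarrow> bool" where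
  "quot_iso_dsum D J M N r K \<longleftrightarrow>
    (\<exists>\<phi>. bij_betw \<phi> (A_RCOSETS M N) (PiE {1..r} (\<lambda>i. carrier (D Quot K i))) \<and>
      (\<forall>U\<in>(A_RCOSETS M N). \<forall>V\<in>(A_RCOSETS M N).
         \<phi> (set_add M U V) = (\<lambda>i\<in>{1..r}. ring.add (D Quot K i) (\<phi> U i) (\<phi> V i))) \<and>
      (\<forall>d\<in>carrier D. \<forall>x\<in>carrier M.
         \<phi> (a_r_coset M N (a_r_coset D J d \<odot>\<^bsub>M\<^esub> x)) =
           (\<lambda>i\<in>{1..r}. monoid.mult (D Quot K i) (a_r_coset D (K i) d) (\<phi> (a_r_coset M N x) i))))"

end

theory Submission
  imports Defs
begin


definition lc :: "('s,'m,'d) module_scheme \<Rightarrow> (nat \<Rightarrow> 's) \<Rightarrow> (nat \<Rightarrow> 'm) \<Rightarrow> nat set \<Rightarrow> 'm" where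
 "lc M c y S = (\<Oplus>\<^bsub>M\<^esub> i\<in>S. c i \<odot>\<^bsub>M\<^esub> y i)"

definition swp :: "nat \<Rightarrow> nat \<Rightarrow> nat \<Rightarrow> nat" where
  "swp k l i = (if i = k then l else if i = l then k else i)"

lemma swp_swp[simp]: "swp k l (swp k l i) = i" unfolding swp_def by auto

lemma swp_image: "k \<in> S \<Longrightarrow> l \<in> S \<Longrightarrow> swp k l ` S = S"
  unfolding swp_def by (auto simp: image_def)

lemma swp_inj: "inj_on (swp k l) S"
  by (metis inj_onI swp_swp)

lemma swp_mem: "k \<in> S \<Longrightarrow> l \<in> S \<Longrightarrow> i \<in> S \<Longrightarrow> swp k l i \<in> S"
  unfolding swp_def by auto


context module begin

lemma lc_closed[simp]: "c \<in> S \<rightarrow> carrier R \<Longrightarrow> y \<in> S \<rightarrow> carrier M \<Longrightarrow> lc M c y S \<in> carrier M"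
  unfolding lc_def by (intro M.finsum_closed) auto

lemma lc_cong: "(\<And>i. i \<in> S \<Longrightarrow> c i \<odot>\<^bsub>M\<^esub> y i = d i \<odot>\<^bsub>M\<^esub> z i) \<Longrightarrow> d \<in> S \<rightarrow> carrier R \<Longrightarrow> z \<in> S \<rightarrow> carrier M
   \<Longrightarrow> lc M c y S = lc M d z S"
  unfolding lc_def by (intro M.finsum_cong') auto

lemma lc_add: "c \<in> S \<rightarrow> carrier R \<Longrightarrow> d \<in> S \<rightarrow> carrier R \<Longrightarrow> y \<in> S \<rightarrow> carrier M \<Longrightarrow>
  lc M (\<lambda>i. c i \<oplus> d i) y S = lc M c y S \<oplus>\<^bsub>M\<^esub> lc M d y S"
proof -
  assume a: "c \<in> S \<rightarrow> carrier R" "d \<in> S \<rightarrow> carrier R" "y \<in> S \<rightarrow> carrier M"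
  have "lc M (\<lambda>i. c i \<oplus> d i) y S = (\<Oplus>\<^bsub>M\<^esub> i\<in>S. c i \<odot>\<^bsub>M\<^esub> y i \<oplus>\<^bsub>M\<^esub> d i \<odot>\<^bsub>M\<^esub> y i)"
    unfolding lc_def using a by (intro M.finsum_cong') (auto simp: Pi_iff smult_l_distr)
  also have "\<dots> = lc M c y S \<oplus>\<^bsub>M\<^esub> lc M d y S"
    unfolding lc_def using a by (intro M.finsum_addf) (auto simp: Pi_iff)
  finally show ?thesis .
qed

lemma lc_smult: "s \<in> carrier R \<Longrightarrow> c \<in> S \<rightarrow> carrier R \<Longrightarrow> y \<in> S \<rightarrow> carrier M \<Longrightarrow> finite S \<Longrightarrow>
  s \<odot>\<^bsub>M\<^esub> lc M c y S = lc M (\<lambda>i. s \<otimes> c i) y S"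
  unfolding lc_def
  apply (subst finsum_smult_ldistr)
     apply (auto intro!: M.finsum_cong' simp: smult_assoc1 Pi_iff)
  done

lemma lc_zero: "(\<And>i. i \<in> S \<Longrightarrow> c i = \<zero>) \<Longrightarrow> y \<in> S \<rightarrow> carrier M \<Longrightarrow> lc M c y S = \<zero>\<^bsub>M\<^esub>"
  unfolding lc_def
  by (rule M.add.finprod_one_eqI) (auto simp: Pi_iff)

lemma lc_Un: "finite S \<Longrightarrow> finite T \<Longrightarrow> S \<inter> T = {} \<Longrightarrow> c \<in> S \<union> T \<rightarrow> carrier R \<Longrightarrow> y \<in> S \<union> T \<rightarrow> carrier M \<Longrightarrow>
  lc M c y (S \<union> T) = lc M c y S \<oplus>\<^bsub>M\<^esub> lc M c y T"
  unfolding lc_def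
  by (rule M.finsum_Un_disjoint) auto

lemma lc_neg: "c \<in> S \<rightarrow> carrier R \<Longrightarrow> y \<in> S \<rightarrow> carrier M \<Longrightarrow> finite S \<Longrightarrow>
  lc M (\<lambda>i. \<ominus> c i) y S = \<ominus>\<^bsub>M\<^esub> lc M c y S"
proof -
  assume a: "c \<in> S \<rightarrow> carrier R" "y \<in> S \<rightarrow> carrier M" "finite S"
  have "lc M (\<lambda>i. \<ominus> c i) y S = lc M (\<lambda>i. (\<ominus>\<one>) \<otimes> c i) y S"
    using a by (intro lc_cong) (auto simp: R.l_minus Pi_iff)
  also have "\<dots> = (\<ominus>\<one>) \<odot>\<^bsub>M\<^esub> lc M c y S" using a by (subst lc_smult) auto
  also have "\<dots> = \<ominus>\<^bsub>M\<^esub> lc M c y S" using a by (simp add: smult_l_minus)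
  finally show ?thesis .
qed

lemma lc_insert: "finite S \<Longrightarrow> k \<notin> S \<Longrightarrow> c \<in> insert k S \<rightarrow> carrier R \<Longrightarrow> y \<in> insert k S \<rightarrow> carrier M \<Longrightarrow>
  lc M c y (insert k S) = c k \<odot>\<^bsub>M\<^esub> y k \<oplus>\<^bsub>M\<^esub> lc M c y S"
  unfolding lc_def by (subst M.finsum_insert) auto

definition indep where
  "indep y S \<longleftrightarrow> (\<forall>c\<in>S \<rightarrow> carrier R. lc M c y S = \<zero>\<^bsub>M\<^esub> \<longrightarrow> (\<forall>i\<in>S. c i = \<zero>))"

definition spans where
  "spans y S \<longleftrightarrow> (\<forall>m\<in>carrier M. \<exists>c\<in>S \<rightarrow> carrier R. m = lc M c y S)"

lemma lc_restrict: "c \<in> S \<rightarrow> carrier R \<Longrightarrow> y \<in> S \<rightarrow> carrier M \<Longrightarrow> lc M (restrict c S) y S = lc M c y S"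
  unfolding lc_def by (intro M.add.finprod_cong) (auto simp: Pi_iff)

lemma lc_diff: "c \<in> S \<rightarrow> carrier R \<Longrightarrow> d \<in> S \<rightarrow> carrier R \<Longrightarrow> y \<in> S \<rightarrow> carrier M \<Longrightarrow> finite S \<Longrightarrow>
  lc M (\<lambda>i. c i \<ominus> d i) y S = lc M c y S \<ominus>\<^bsub>M\<^esub> lc M d y S"
  unfolding a_minus_def
  apply (subst lc_add) apply (auto simp: Pi_iff)
  apply (subst lc_neg) apply (auto simp: Pi_iff)
  done

lemma is_basis_iff: "is_basis R M y r \<longleftrightarrow> y \<in> {1..r} \<rightarrow> carrier M \<and> spans y {1..r} \<and> indep y {1..r}"
proof
  assume b: "is_basis R M y r"
  hence y: "y \<in> {1..r} \<rightarrow> carrier M" unfolding is_basis_def by auto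
  have sp: "spans y {1..r}" unfolding spans_def
  proof
    fix m assume "m \<in> carrier M"
    then obtain c where "c \<in> {1..r} \<rightarrow>\<^sub>E carrier R" "m = lc M c y {1..r}"
      using b unfolding is_basis_def lc_def by blast
    thus "\<exists>c\<in>{1..r} \<rightarrow> carrier R. m = lc M c y {1..r}" by (auto simp: PiE_def)
  qed
  have ind: "indep y {1..r}" unfolding indep_def
  proof (intro ballI impI)
    fix c i assume c: "c \<in> {1..r} \<rightarrow> carrier R" and z: "lc M c y {1..r} = \<zero>\<^bsub>M\<^esub>" and i: "i \<in> {1..r}"
    have u: "\<exists>!c. c \<in> {1..r} \<rightarrow>\<^sub>E carrier R \<and> \<zero>\<^bsub>M\<^esub> = lc M c y {1..r}"
      using b unfolding is_basis_def lc_def by auto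
    have 1: "restrict c {1..r} \<in> {1..r} \<rightarrow>\<^sub>E carrier R \<and> \<zero>\<^bsub>M\<^esub> = lc M (restrict c {1..r}) y {1..r}"
      using c z y by (simp add: lc_restrict)
    have 2: "(\<lambda>i\<in>{1..r}. \<zero>) \<in> {1..r} \<rightarrow>\<^sub>E carrier R \<and> \<zero>\<^bsub>M\<^esub> = lc M (\<lambda>i\<in>{1..r}. \<zero>) y {1..r}"
      using y by (auto intro!: lc_zero[symmetric])
    have "restrict c {1..r} = (\<lambda>i\<in>{1..r}. \<zero>)" using u 1 2 by blast
    thus "c i = \<zero>" using i by (metis restrict_apply')
  qed
  show "y \<in> {1..r} \<rightarrow> carrier M \<and> spans y {1..r} \<and> indep y {1..r}" using y sp ind by auto
next
  assume a: "y \<in> {1..r} \<rightarrow> carrier M \<and> spans y {1..r} \<and> indep y {1..r}"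
  show "is_basis R M y r" unfolding is_basis_def
  proof (intro conjI ballI)
    fix i assume "i \<in> {1..r}" thus "y i \<in> carrier M" using a by auto
  next
    fix m assume m: "m \<in> carrier M"
    then obtain c where c: "c \<in> {1..r} \<rightarrow> carrier R" "m = lc M c y {1..r}"
      using a unfolding spans_def by blast
    show "\<exists>!c. c \<in> {1..r} \<rightarrow>\<^sub>E carrier R \<and> m = (\<Oplus>\<^bsub>M\<^esub>i\<in>{1..r}. c i \<odot>\<^bsub>M\<^esub> y i)"
    proof (rule ex1I[of _ "restrict c {1..r}"])
      show "restrict c {1..r} \<in> {1..r} \<rightarrow>\<^sub>E carrier R \<and> m = (\<Oplus>\<^bsub>M\<^esub>i\<in>{1..r}. restrict c {1..r} i \<odot>\<^bsub>M\<^esub> y i)"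
      proof
        show "restrict c {1..r} \<in> {1..r} \<rightarrow>\<^sub>E carrier R" using c by auto
        have "lc M (restrict c {1..r}) y {1..r} = m" using c a by (simp add: lc_restrict)
        thus "m = (\<Oplus>\<^bsub>M\<^esub>i\<in>{1..r}. restrict c {1..r} i \<odot>\<^bsub>M\<^esub> y i)" unfolding lc_def by simp
      qed
    next
      fix d assume d: "d \<in> {1..r} \<rightarrow>\<^sub>E carrier R \<and> m = (\<Oplus>\<^bsub>M\<^esub>i\<in>{1..r}. d i \<odot>\<^bsub>M\<^esub> y i)"
      have "lc M (\<lambda>i. d i \<ominus> c i) y {1..r} = \<zero>\<^bsub>M\<^esub>"
        using d c a m by (subst lc_diff) (auto simp: PiE_def lc_def[symmetric] M.r_neg a_minus_def)
      hence "\<forall>i\<in>{1..r}. d i \<ominus> c i = \<zero>" using a c d unfolding indep_def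
        by (auto simp: PiE_def Pi_iff)
      have "\<forall>i\<in>{1..r}. d i = c i"
      proof
        fix i assume i: "i \<in> {1..r}"
        have "d i \<in> carrier R" "c i \<in> carrier R" using i c d by (auto simp: PiE_iff)
        thus "d i = c i" using i \<open>\<forall>i\<in>{1..r}. d i \<ominus> c i = \<zero>\<close> R.r_right_minus_eq by blast
      qed
      thus "d = restrict c {1..r}" using d by (auto simp: PiE_def extensional_def)
    qed
  qed
qed

lemma lc_exchange_eq:
  assumes fin: "finite S" and k: "k \<in> S" and c: "c \<in> S \<rightarrow> carrier R" and b: "b \<in> S \<rightarrow> carrier R"
    and y: "y \<in> S \<rightarrow> carrier M"
  shows "lc M b (y(k := lc M c y S)) S = lc M (\<lambda>i. (if i = k then \<zero> else b i) \<oplus> b k \<otimes> c i) y S"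
proof -
  let ?z = "lc M c y S"
  have z: "?z \<in> carrier M" using c y by simp
  have S: "S = insert k (S - {k})" using k by auto
  have bk: "b k \<in> carrier R" using b k by auto
  have S': "insert k (S - {k}) = S" using k by auto
  have e1: "lc M b (y(k := ?z)) (insert k (S - {k})) = b k \<odot>\<^bsub>M\<^esub> (y(k := ?z)) k \<oplus>\<^bsub>M\<^esub> lc M b (y(k := ?z)) (S - {k})"
    using fin b y z k by (intro lc_insert) (auto simp: Pi_iff)
  have "lc M b (y(k := ?z)) S = b k \<odot>\<^bsub>M\<^esub> ?z \<oplus>\<^bsub>M\<^esub> lc M b (y(k := ?z)) (S - {k})"
    using e1 by (simp only: S' fun_upd_same)
  also have "lc M b (y(k := ?z)) (S - {k}) = lc M b y (S - {k})"
    using b y by (intro lc_cong) (auto simp: Pi_iff)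
  also have "\<dots> = lc M (\<lambda>i. if i = k then \<zero> else b i) y S"
  proof -
    have "lc M (\<lambda>i. if i = k then \<zero> else b i) y (insert k (S - {k})) = \<zero> \<odot>\<^bsub>M\<^esub> y k \<oplus>\<^bsub>M\<^esub> lc M (\<lambda>i. if i = k then \<zero> else b i) y (S - {k})"
      using fin b y k by (subst lc_insert) (auto simp: Pi_iff)
    also have "\<dots> = lc M (\<lambda>i. if i = k then \<zero> else b i) y (S - {k})"
      using y k b by (auto simp: Pi_iff)
    also have "\<dots> = lc M b y (S - {k})"
      using y k b by (intro lc_cong) (auto simp: Pi_iff)
    finally show ?thesis by (simp only: S')
  qed
  also have "b k \<odot>\<^bsub>M\<^esub> ?z = lc M (\<lambda>i. b k \<otimes> c i) y S"
    using bk c y fin by (simp add: lc_smult)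
  finally have "lc M b (y(k := ?z)) S = lc M (\<lambda>i. b k \<otimes> c i) y S \<oplus>\<^bsub>M\<^esub> lc M (\<lambda>i. if i = k then \<zero> else b i) y S" .
  also have "\<dots> = lc M (\<lambda>i. (if i = k then \<zero> else b i) \<oplus> b k \<otimes> c i) y S"
  proof -
    have cS: "\<forall>i\<in>S. c i \<in> carrier R" using c by auto
    show ?thesis using bk b cS y by (subst lc_add) (auto simp: Pi_iff M.a_comm)
  qed
  finally show ?thesis .
qed

lemma exchange:
  assumes fin: "finite S" and k: "k \<in> S" and c: "c \<in> S \<rightarrow> carrier R" and u: "c k \<in> Units R"
    and y: "y \<in> S \<rightarrow> carrier M" and sp: "spans y S" and ind: "indep y S"
  shows "y(k := lc M c y S) \<in> S \<rightarrow> carrier M" "spans (y(k := lc M c y S)) S" "indep (y(k := lc M c y S)) S"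
proof -
  let ?y = "y(k := lc M c y S)"
  show "?y \<in> S \<rightarrow> carrier M" using y c by auto
  have ck: "c k \<in> carrier R" using c k by auto
  let ?u = "inv c k"
  have uc: "?u \<in> carrier R" using u by auto
  show "spans ?y S" unfolding spans_def
  proof
    fix m assume "m \<in> carrier M"
    then obtain d where d: "d \<in> S \<rightarrow> carrier R" "m = lc M d y S" using sp unfolding spans_def by blast
    have dk: "d k \<in> carrier R" using d k by auto
    define b where "b = (\<lambda>i. if i = k then d k \<otimes> ?u else d i \<ominus> d k \<otimes> ?u \<otimes> c i)"
    have b: "b \<in> S \<rightarrow> carrier R" using d c dk uc unfolding b_def by (auto simp: Pi_iff)
    have "lc M b ?y S = lc M (\<lambda>i. (if i = k then \<zero> else b i) \<oplus> b k \<otimes> c i) y S"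
      using fin k c b y by (rule lc_exchange_eq)
    also have "\<dots> = lc M d y S"
    proof (rule lc_cong)
      fix i assume i: "i \<in> S"
      have ci: "c i \<in> carrier R" and di: "d i \<in> carrier R" using i c d by auto
      have "(if i = k then \<zero> else b i) \<oplus> b k \<otimes> c i = d i"
      proof (cases "i = k")
        case True
        have "d k \<otimes> ?u \<otimes> c k = d k \<otimes> (?u \<otimes> c k)" using dk uc ck by (simp add: R.m_assoc)
        also have "\<dots> = d k" using u dk by simp
        finally show ?thesis using True dk uc ck unfolding b_def by simp
      next
        case False
        have "d i \<ominus> d k \<otimes> ?u \<otimes> c i \<oplus> d k \<otimes> ?u \<otimes> c i = d i"
          using di dk uc ci by (simp add: a_minus_def R.a_assoc R.l_neg)
        thus ?thesis using False unfolding b_def by simp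
      qed
      thus "((if i = k then \<zero> else b i) \<oplus> b k \<otimes> c i) \<odot>\<^bsub>M\<^esub> y i = d i \<odot>\<^bsub>M\<^esub> y i" by simp
    qed (use d y in auto)
    finally have eq: "lc M b ?y S = lc M d y S" .
    show "\<exists>b\<in>S \<rightarrow> carrier R. m = lc M b ?y S" using b d(2) eq by metis
  qed
  show "indep ?y S" unfolding indep_def
  proof (intro ballI impI)
    fix b i assume b: "b \<in> S \<rightarrow> carrier R" and z: "lc M b ?y S = \<zero>\<^bsub>M\<^esub>" and i: "i \<in> S"
    have bk: "b k \<in> carrier R" using b k by auto
    have "lc M (\<lambda>i. (if i = k then \<zero> else b i) \<oplus> b k \<otimes> c i) y S = \<zero>\<^bsub>M\<^esub>"
      using z lc_exchange_eq[OF fin k c b y] by simp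
    moreover have "(\<lambda>i. (if i = k then \<zero> else b i) \<oplus> b k \<otimes> c i) \<in> S \<rightarrow> carrier R"
      using b c bk by (auto simp: Pi_iff)
    ultimately have all: "\<forall>i\<in>S. (if i = k then \<zero> else b i) \<oplus> b k \<otimes> c i = \<zero>"
      using ind unfolding indep_def by blast
    hence "b k \<otimes> c k = \<zero>" using k bk ck by auto
    hence "b k \<otimes> c k \<otimes> ?u = \<zero>" using uc by simp
    hence bk0: "b k = \<zero>" using bk ck uc u by (simp add: R.m_assoc)
    show "b i = \<zero>"
    proof (cases "i = k")
      case True thus ?thesis using bk0 by simp
    next
      case False
      have "b i \<oplus> b k \<otimes> c i = \<zero>" using all i False by auto
      thus ?thesis using bk0 b c i by (auto simp: Pi_iff)
    qed
  qed
qed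

lemma lc_swp:
  assumes "k \<in> S" "l \<in> S" "b \<in> S \<rightarrow> carrier R" "y \<in> S \<rightarrow> carrier M"
  shows "lc M b (y \<circ> swp k l) S = lc M (b \<circ> swp k l) y S"
proof -
  have "lc M (b \<circ> swp k l) y S = lc M (b \<circ> swp k l) y (swp k l ` S)" using swp_image assms by simp
  also have "\<dots> = (\<Oplus>\<^bsub>M\<^esub> i\<in>S. b (swp k l (swp k l i)) \<odot>\<^bsub>M\<^esub> y (swp k l i))"
    unfolding lc_def using assms
    by (subst M.finsum_reindex) (auto simp: swp_inj Pi_iff swp_mem)
  also have "\<dots> = lc M b (y \<circ> swp k l) S" unfolding lc_def by simp
  finally show ?thesis by simp
qed

lemma swap_basis:
  assumes k: "k \<in> S" and l: "l \<in> S" and y: "y \<in> S \<rightarrow> carrier M" and sp: "spans y S" and ind: "indep y S"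
  shows "y \<circ> swp k l \<in> S \<rightarrow> carrier M" "spans (y \<circ> swp k l) S" "indep (y \<circ> swp k l) S"
proof -
  show "y \<circ> swp k l \<in> S \<rightarrow> carrier M" using y k l swp_mem by (auto simp: Pi_iff)
  show "spans (y \<circ> swp k l) S" unfolding spans_def
  proof
    fix m assume "m \<in> carrier M"
    then obtain d where d: "d \<in> S \<rightarrow> carrier R" "m = lc M d y S" using sp unfolding spans_def by blast
    have d': "d \<circ> swp k l \<in> S \<rightarrow> carrier R" using d k l swp_mem by (auto simp: Pi_iff)
    have "lc M (d \<circ> swp k l) (y \<circ> swp k l) S = lc M d y S"
      using lc_swp[OF k l d' y] by (simp add: comp_def)
    thus "\<exists>b\<in>S \<rightarrow> carrier R. m = lc M b (y \<circ> swp k l) S" using d d' by metis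
  qed
  show "indep (y \<circ> swp k l) S" unfolding indep_def
  proof (intro ballI impI)
    fix b i assume b: "b \<in> S \<rightarrow> carrier R" and z: "lc M b (y \<circ> swp k l) S = \<zero>\<^bsub>M\<^esub>" and i: "i \<in> S"
    have b': "b \<circ> swp k l \<in> S \<rightarrow> carrier R" using b k l swp_mem by (auto simp: Pi_iff)
    have "lc M (b \<circ> swp k l) y S = \<zero>\<^bsub>M\<^esub>" using z lc_swp[OF k l b y] by simp
    hence "\<forall>i\<in>S. (b \<circ> swp k l) i = \<zero>" using ind b' unfolding indep_def by blast
    hence "(b \<circ> swp k l) (swp k l i) = \<zero>" using swp_mem[OF k l i] by blast
    thus "b i = \<zero>" by simp
  qed
qed

end


context module begin

lemma extend_basis:
  assumes e: "e \<in> {1..r} \<rightarrow> carrier M" "spans e {1..r}" "indep e {1..r}"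
    and z: "z \<in> {1..j} \<rightarrow> carrier M" and jr: "j \<le> r"
    and a: "a \<in> carrier R"
    and modind: "\<forall>b\<in>{1..j}\<rightarrow>carrier R. (\<exists>w\<in>carrier M. lc M b z {1..j} = a \<odot>\<^bsub>M\<^esub> w) \<longrightarrow> (\<forall>i\<in>{1..j}. \<exists>t\<in>carrier R. b i = a \<otimes> t)"
    and loc: "\<forall>c\<in>carrier R. c \<in> Units R \<or> (\<exists>t\<in>carrier R. c = a \<otimes> t)"
    and one: "\<not>(\<exists>t\<in>carrier R. \<one> = a \<otimes> t)"
  shows "\<exists>y. y \<in> {1..r} \<rightarrow> carrier M \<and> spans y {1..r} \<and> indep y {1..r} \<and> (\<forall>i\<in>{1..j}. y i = z i)"
proof -
  have "\<forall>p. p \<le> j \<longrightarrow> (\<exists>y. y \<in> {1..r} \<rightarrow> carrier M \<and> spans y {1..r} \<and> indep y {1..r} \<and> (\<forall>i\<in>{1..p}. y i = z i))"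
  proof (intro allI)
    fix p show "p \<le> j \<longrightarrow> (\<exists>y. y \<in> {1..r} \<rightarrow> carrier M \<and> spans y {1..r} \<and> indep y {1..r} \<and> (\<forall>i\<in>{1..p}. y i = z i))"
    proof (induction p)
      case 0 show ?case using e by auto
    next
      case (Suc p)
      show ?case
      proof
        assume pj: "Suc p \<le> j"
        then obtain y where y: "y \<in> {1..r} \<rightarrow> carrier M" "spans y {1..r}" "indep y {1..r}" "\<forall>i\<in>{1..p}. y i = z i"
          using Suc by auto
        have zp: "z (Suc p) \<in> carrier M" using z pj by auto
        then obtain c where c: "c \<in> {1..r} \<rightarrow> carrier R" "z (Suc p) = lc M c y {1..r}"
          using y unfolding spans_def by blast
        have "\<exists>k\<in>{Suc p..r}. c k \<in> Units R"
        proof (rule ccontr)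
          assume "\<not> ?thesis"
          hence "\<forall>k\<in>{Suc p..r}. \<exists>t\<in>carrier R. c k = a \<otimes> t" using loc c by (auto simp: Pi_iff)
          then obtain tt where tt: "\<forall>k\<in>{Suc p..r}. tt k \<in> carrier R \<and> c k = a \<otimes> tt k"
            by metis
          define b where "b = (\<lambda>i. if i \<le> p then \<ominus> c i else if i = Suc p then \<one> else \<zero>)"
          have cp: "c \<in> {1..p} \<rightarrow> carrier R" using c pj jr by (auto simp: Pi_iff)
          have yp: "y \<in> {1..p} \<rightarrow> carrier M" using y(1) pj jr by (auto simp: Pi_iff)
          have b: "b \<in> {1..j} \<rightarrow> carrier R" using c pj jr unfolding b_def by (auto simp: Pi_iff)
          have s1: "{1..j} = {1..p} \<union> insert (Suc p) {Suc (Suc p)..j}" using pj by auto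
          have s2: "{1..r} = {1..p} \<union> {Suc p..r}" using pj jr by auto
          let ?A = "lc M c y {1..p}" and ?B = "lc M c y {Suc p..r}"
          have A: "?A \<in> carrier M" using cp yp by simp
          have B: "?B \<in> carrier M" using c y by (auto simp: Pi_iff intro!: lc_closed)
          have zsp: "z (Suc p) = ?A \<oplus>\<^bsub>M\<^esub> ?B"
            using c(1) y(1) pj jr by (simp only: c(2), subst s2, subst lc_Un) (auto simp: Pi_iff)
          have "lc M b z {1..j} = lc M b z {1..p} \<oplus>\<^bsub>M\<^esub> lc M b z (insert (Suc p) {Suc (Suc p)..j})"
            using b z pj by (subst s1, subst lc_Un) (auto simp: Pi_iff)
          also have "lc M b z (insert (Suc p) {Suc (Suc p)..j}) = b (Suc p) \<odot>\<^bsub>M\<^esub> z (Suc p) \<oplus>\<^bsub>M\<^esub> lc M b z {Suc (Suc p)..j}"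
            using b z pj by (subst lc_insert) (auto simp: Pi_iff)
          also have "lc M b z {Suc (Suc p)..j} = \<zero>\<^bsub>M\<^esub>"
            using z by (intro lc_zero) (auto simp: b_def Pi_iff)
          also have "lc M b z {1..p} = lc M (\<lambda>i. \<ominus> c i) y {1..p}"
            using cp y z pj by (intro lc_cong) (auto simp: b_def Pi_iff)
          also have "\<dots> = \<ominus>\<^bsub>M\<^esub> ?A" using cp yp by (simp add: lc_neg)
          finally have "lc M b z {1..j} = \<ominus>\<^bsub>M\<^esub> ?A \<oplus>\<^bsub>M\<^esub> (?A \<oplus>\<^bsub>M\<^esub> ?B)"
            using zsp zp A B by (simp add: b_def)
          also have "\<dots> = ?B" using A B by (simp add: M.a_assoc[symmetric] M.l_neg)
          also have "?B = lc M (\<lambda>k. a \<otimes> tt k) y {Suc p..r}"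
            using tt y a by (intro lc_cong) (auto simp: Pi_iff)
          also have "\<dots> = a \<odot>\<^bsub>M\<^esub> lc M tt y {Suc p..r}"
            using tt y a by (subst lc_smult) (auto simp: Pi_iff)
          finally have "\<exists>w\<in>carrier M. lc M b z {1..j} = a \<odot>\<^bsub>M\<^esub> w"
            using tt y by (auto simp: Pi_iff intro!: lc_closed)
          hence "\<exists>t\<in>carrier R. b (Suc p) = a \<otimes> t" using modind b pj by auto
          thus False using one by (simp add: b_def)
        qed
        then obtain k where k: "k \<in> {Suc p..r}" "c k \<in> Units R" by blast
        have k1: "k \<in> {1..r}" and sp1: "Suc p \<in> {1..r}" using k pj jr by auto
        let ?y2 = "y \<circ> swp k (Suc p)"
        have y2: "?y2 \<in> {1..r} \<rightarrow> carrier M" "spans ?y2 {1..r}" "indep ?y2 {1..r}"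
          using swap_basis[OF k1 sp1 y(1-3)] by auto
        let ?c2 = "c \<circ> swp k (Suc p)"
        have c2: "?c2 \<in> {1..r} \<rightarrow> carrier R"
        proof
          fix i assume i: "i \<in> {1..r}"
          have "swp k (Suc p) i \<in> {1..r}" by (rule swp_mem[OF k1 sp1 i])
          thus "?c2 i \<in> carrier R" using c(1) by auto
        qed
        have "lc M ?c2 ?y2 {1..r} = lc M (?c2 \<circ> swp k (Suc p)) y {1..r}"
          using lc_swp[OF k1 sp1 c2 y(1)] .
        also have "?c2 \<circ> swp k (Suc p) = c" by (auto simp: comp_def)
        finally have zc2: "z (Suc p) = lc M ?c2 ?y2 {1..r}" using c by (simp add: comp_def)
        have u2: "?c2 (Suc p) \<in> Units R" using k by (simp add: swp_def)
        let ?y3 = "?y2(Suc p := lc M ?c2 ?y2 {1..r})"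
        have y3: "?y3 \<in> {1..r} \<rightarrow> carrier M" "spans ?y3 {1..r}" "indep ?y3 {1..r}"
          using exchange[OF finite_atLeastAtMost sp1 c2 u2 y2] by blast+
        have "\<forall>i\<in>{1..Suc p}. ?y3 i = z i"
        proof
          fix i assume i: "i \<in> {1..Suc p}"
          show "?y3 i = z i"
          proof (cases "i = Suc p")
            case True thus ?thesis using zc2 by simp
          next
            case False
            hence "i \<le> p" "i \<noteq> k" using i k by auto
            thus ?thesis using y(4) i False by (auto simp: swp_def)
          qed
        qed
        thus "\<exists>y. y \<in> {1..r} \<rightarrow> carrier M \<and> spans y {1..r} \<and> indep y {1..r} \<and> (\<forall>i\<in>{1..Suc p}. y i = z i)"
          using y3 by blast
      qed
    qed
  qed
  thus ?thesis by auto
qed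

end


context module begin

lemma one_not_mult_a:
  assumes a: "a \<in> carrier R" and an: "a [^] (n::nat) = \<zero>" and an1: "a [^] (n - 1) \<noteq> \<zero>"
  shows "\<not>(\<exists>t\<in>carrier R. \<one> = a \<otimes> t)"
proof
  assume "\<exists>t\<in>carrier R. \<one> = a \<otimes> t"
  then obtain t where t: "t \<in> carrier R" "\<one> = a \<otimes> t" by blast
  have "(a \<otimes> t) [^] n = \<one>" using t(2)[symmetric] by simp
  hence "\<one> = (a \<otimes> t) [^] n" by simp
  also have "\<dots> = a [^] n \<otimes> t [^] n" using a t by (simp add: R.nat_pow_distrib)
  also have "\<dots> = \<zero>" using an t by simp
  finally have "\<one> = \<zero>" .
  hence "a [^] (n - 1) = \<zero>" using a by (metis R.nat_pow_closed R.r_null R.r_one)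
  thus False using an1 by simp
qed

lemma P4:
  assumes a: "a \<in> carrier R" and an: "a [^] (n::nat) = \<zero>" and an1: "a [^] (n - 1) \<noteq> \<zero>"
    and loc: "\<forall>c\<in>carrier R. c \<in> Units R \<or> (\<exists>t\<in>carrier R. c = a \<otimes> t)"
    and k: "1 \<le> k" "k \<le> n" and c: "c \<in> carrier R" and t: "t \<in> carrier R"
    and eq: "c \<otimes> a [^] (k - 1) = a [^] k \<otimes> t"
  shows "\<exists>s\<in>carrier R. c = a \<otimes> s"
proof (rule ccontr)
  assume "\<not> ?thesis"
  hence u: "c \<in> Units R" using loc c by auto
  let ?b = "a [^] (k - 1)"
  have b: "?b \<in> carrier R" using a by simp
  have ak: "a [^] k = ?b \<otimes> a" using a k by (metis R.nat_pow_Suc Suc_diff_le diff_Suc_1 le_refl Suc_le_lessD le_add_diff_inverse2 plus_1_eq_Suc)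
  define s where "s = inv c \<otimes> t"
  have s: "s \<in> carrier R" using u t unfolding s_def by simp
  have "?b = inv c \<otimes> (c \<otimes> ?b)" using u b by (metis R.Units_closed R.Units_inv_closed R.Units_l_inv R.l_one R.m_assoc)
  also have "\<dots> = inv c \<otimes> (?b \<otimes> a \<otimes> t)" using eq ak by simp
  also have "\<dots> = ?b \<otimes> (a \<otimes> s)" using u b a t unfolding s_def
    by (simp add: R.m_assoc R.m_lcomm)
  finally have e: "?b = ?b \<otimes> (a \<otimes> s)" .
  have as: "a \<otimes> s \<in> carrier R" using a s by simp
  have "?b \<otimes> (\<one> \<ominus> a \<otimes> s) = ?b \<ominus> ?b \<otimes> (a \<otimes> s)" using b as by (simp add: a_minus_def R.r_distr R.r_minus)
  also have "\<dots> = \<zero>"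
  proof -
    have "?b \<otimes> (a \<otimes> s) = ?b" using e by simp
    thus ?thesis using b by (simp add: a_minus_def R.r_neg)
  qed
  finally have z: "?b \<otimes> (\<one> \<ominus> a \<otimes> s) = \<zero>" .
  have o: "\<one> \<ominus> a \<otimes> s \<in> carrier R" using as by simp
  show False
  proof (cases "\<one> \<ominus> a \<otimes> s \<in> Units R")
    case True
    let ?o = "\<one> \<ominus> a \<otimes> s"
    have io: "inv ?o \<in> carrier R" using True by simp
    have "?b = ?b \<otimes> (?o \<otimes> inv ?o)" using True b by simp
    also have "\<dots> = (?b \<otimes> ?o) \<otimes> inv ?o" using b o io by (simp add: R.m_assoc)
    also have "\<dots> = \<zero>" using z io by simp
    finally have b0: "?b = \<zero>" .
    have "a [^] (k - 1) \<otimes> a [^] (n - k) = a [^] ((k - 1) + (n - k))" using a by (simp add: R.nat_pow_mult)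
    also have "(k - 1) + (n - k) = n - 1" using k by simp
    finally have "a [^] (n - 1) = \<zero>" using b0 a by simp
    thus False using an1 by simp
  next
    case False
    then obtain t' where t': "t' \<in> carrier R" "\<one> \<ominus> a \<otimes> s = a \<otimes> t'" using loc o by blast
    have "\<one> = a \<otimes> (s \<oplus> t')"
    proof -
      have "\<one> = (\<one> \<ominus> a \<otimes> s) \<oplus> a \<otimes> s" using as by (simp add: a_minus_def R.a_assoc R.l_neg)
      also have "\<dots> = a \<otimes> t' \<oplus> a \<otimes> s" using t' by simp
      also have "\<dots> = a \<otimes> (s \<oplus> t')" using a s t' by (simp add: R.r_distr R.a_comm)
      finally show ?thesis .
    qed
    thus False using one_not_mult_a[OF a an an1] s t' by blast
  qed
qed

end


context module begin

lemma main_abstract: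
  assumes e: "is_basis R M e r" and jr: "j \<le> r"
    and a: "a \<in> carrier R" and an: "a [^] (n::nat) = \<zero>" and an1: "a [^] (n - 1) \<noteq> \<zero>" and n1: "1 \<le> n"
    and loc: "\<forall>c\<in>carrier R. c \<in> Units R \<or> (\<exists>t\<in>carrier R. c = a \<otimes> t)"
    and P3: "\<forall>k\<le>n. \<forall>c\<in>carrier R. a [^] k \<otimes> c = \<zero> \<longrightarrow> (\<exists>t\<in>carrier R. c = a [^] (n - k) \<otimes> t)"
    and x: "\<forall>i\<in>{1..j}. x i \<in> carrier M" and dir: "sum_is_direct R M x j"
    and ni: "\<forall>i\<in>{1..j}. 1 \<le> ni i \<and> ni i \<le> n"
    and ann: "\<forall>i\<in>{1..j}. Ann R M (x i) = {a [^] ni i \<otimes> t | t. t \<in> carrier R}"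
  shows "\<exists>y. is_basis R M y r \<and> (\<forall>c\<in>{1..r}\<rightarrow>carrier R. lc M c y {1..r} \<in> lin_span R M x j \<longleftrightarrow>
            (\<forall>i\<in>{1..r}. \<exists>t\<in>carrier R. c i = a [^] (n - (if i \<le> j then ni i else 0)) \<otimes> t))"
proof -
  have eb: "e \<in> {1..r} \<rightarrow> carrier M" "spans e {1..r}" "indep e {1..r}" using e is_basis_iff by auto
  have stepA: "\<forall>i\<in>{1..j}. \<exists>w\<in>carrier M. x i = a [^] (n - ni i) \<odot>\<^bsub>M\<^esub> w"
  proof
    fix i assume i: "i \<in> {1..j}"
    have xi: "x i \<in> carrier M" using x i by auto
    obtain c where c: "c \<in> {1..r} \<rightarrow> carrier R" "x i = lc M c e {1..r}"
      using eb(2) xi unfolding spans_def by blast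
    let ?p = "a [^] ni i"
    have p: "?p \<in> carrier R" using a by simp
    have "?p \<in> {a [^] ni i \<otimes> t | t. t \<in> carrier R}" unfolding mem_Collect_eq
      by (rule exI[of _ "\<one>"]) (simp add: p)
    hence "?p \<in> Ann R M (x i)" using ann i by simp
    hence "?p \<odot>\<^bsub>M\<^esub> x i = \<zero>\<^bsub>M\<^esub>" unfolding Ann_def by auto
    hence "lc M (\<lambda>k. ?p \<otimes> c k) e {1..r} = \<zero>\<^bsub>M\<^esub>" using c eb p by (simp add: lc_smult)
    moreover have "(\<lambda>k. ?p \<otimes> c k) \<in> {1..r} \<rightarrow> carrier R" using c p by (auto simp: Pi_iff)
    ultimately have "\<forall>k\<in>{1..r}. ?p \<otimes> c k = \<zero>" using eb(3) unfolding indep_def by blast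
    hence "\<forall>k\<in>{1..r}. \<exists>t\<in>carrier R. c k = a [^] (n - ni i) \<otimes> t" using P3 ni i c by (auto simp: Pi_iff)
    then obtain tt where tt: "\<forall>k\<in>{1..r}. tt k \<in> carrier R \<and> c k = a [^] (n - ni i) \<otimes> tt k" by metis
    have "x i = lc M (\<lambda>k. a [^] (n - ni i) \<otimes> tt k) e {1..r}"
      using c(2) tt eb(1) a by (simp only:) (intro lc_cong, auto simp: Pi_iff)
    also have "\<dots> = a [^] (n - ni i) \<odot>\<^bsub>M\<^esub> lc M tt e {1..r}"
      using tt eb(1) a by (subst lc_smult) (auto simp: Pi_iff)
    finally show "\<exists>w\<in>carrier M. x i = a [^] (n - ni i) \<odot>\<^bsub>M\<^esub> w"
      using tt eb(1) by (auto simp: Pi_iff intro!: lc_closed)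
  qed
  then obtain z where z: "\<forall>i\<in>{1..j}. z i \<in> carrier M \<and> x i = a [^] (n - ni i) \<odot>\<^bsub>M\<^esub> z i" by metis
  have zP: "z \<in> {1..j} \<rightarrow> carrier M" using z by auto
  have modind: "\<forall>b\<in>{1..j}\<rightarrow>carrier R. (\<exists>w\<in>carrier M. lc M b z {1..j} = a \<odot>\<^bsub>M\<^esub> w) \<longrightarrow> (\<forall>i\<in>{1..j}. \<exists>t\<in>carrier R. b i = a \<otimes> t)"
  proof (intro ballI impI)
    fix b i assume b: "b \<in> {1..j} \<rightarrow> carrier R" and ex: "\<exists>w\<in>carrier M. lc M b z {1..j} = a \<odot>\<^bsub>M\<^esub> w" and i: "i \<in> {1..j}"
    obtain w where w: "w \<in> carrier M" "lc M b z {1..j} = a \<odot>\<^bsub>M\<^esub> w" using ex by blast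
    let ?q = "a [^] (n - 1)"
    have q: "?q \<in> carrier R" using a by simp
    have qa: "?q \<otimes> a = \<zero>" using an n1 by (metis R.nat_pow_Suc Suc_diff_le diff_Suc_1)
    have "?q \<odot>\<^bsub>M\<^esub> lc M b z {1..j} = \<zero>\<^bsub>M\<^esub>"
      using w q a qa by (simp add: smult_assoc1[symmetric])
    hence z1: "lc M (\<lambda>i. ?q \<otimes> b i) z {1..j} = \<zero>\<^bsub>M\<^esub>" using b zP q by (simp add: lc_smult)
    have bx: "(\<lambda>i. b i \<otimes> a [^] (ni i - 1)) \<in> {1..j} \<rightarrow> carrier R" using b a by (auto simp: Pi_iff)
    have "lc M (\<lambda>i. ?q \<otimes> b i) z {1..j} = lc M (\<lambda>i. b i \<otimes> a [^] (ni i - 1)) x {1..j}"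
    proof (rule lc_cong)
      fix k assume k: "k \<in> {1..j}"
      have bk: "b k \<in> carrier R" using b k by auto
      have "a [^] (ni k - 1) \<otimes> a [^] (n - ni k) = a [^] ((ni k - 1) + (n - ni k))" using a by (simp add: R.nat_pow_mult)
      also have "(ni k - 1) + (n - ni k) = n - 1" using ni k by auto
      finally have pq: "a [^] (ni k - 1) \<otimes> a [^] (n - ni k) = ?q" .
      have "(b k \<otimes> a [^] (ni k - 1)) \<odot>\<^bsub>M\<^esub> x k = (b k \<otimes> a [^] (ni k - 1)) \<odot>\<^bsub>M\<^esub> (a [^] (n - ni k) \<odot>\<^bsub>M\<^esub> z k)"
        using z k by auto
      also have "\<dots> = ((b k \<otimes> a [^] (ni k - 1)) \<otimes> a [^] (n - ni k)) \<odot>\<^bsub>M\<^esub> z k"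
        using z k bk a by (simp add: smult_assoc1)
      also have "(b k \<otimes> a [^] (ni k - 1)) \<otimes> a [^] (n - ni k) = ?q \<otimes> b k"
      proof -
        have "(b k \<otimes> a [^] (ni k - 1)) \<otimes> a [^] (n - ni k) = b k \<otimes> (a [^] (ni k - 1) \<otimes> a [^] (n - ni k))"
          using bk a by (simp add: R.m_assoc)
        also have "\<dots> = b k \<otimes> ?q" using pq by simp
        also have "\<dots> = ?q \<otimes> b k" using bk q by (simp add: R.m_comm)
        finally show ?thesis .
      qed
      finally show "(?q \<otimes> b k) \<odot>\<^bsub>M\<^esub> z k = (b k \<otimes> a [^] (ni k - 1)) \<odot>\<^bsub>M\<^esub> x k" by simp
    qed (use bx x in auto)
    hence "(\<Oplus>\<^bsub>M\<^esub>i\<in>{1..j}. (b i \<otimes> a [^] (ni i - 1)) \<odot>\<^bsub>M\<^esub> x i) = \<zero>\<^bsub>M\<^esub>" using z1 unfolding lc_def by simp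
    hence "(b i \<otimes> a [^] (ni i - 1)) \<odot>\<^bsub>M\<^esub> x i = \<zero>\<^bsub>M\<^esub>" using bspec[OF dir[unfolded sum_is_direct_def] bx] i by simp
    hence "b i \<otimes> a [^] (ni i - 1) \<in> Ann R M (x i)" using bx i unfolding Ann_def by auto
    then obtain t where t: "t \<in> carrier R" "b i \<otimes> a [^] (ni i - 1) = a [^] ni i \<otimes> t" using ann i by auto
    show "\<exists>t\<in>carrier R. b i = a \<otimes> t"
    proof -
      have "b i \<in> carrier R" using b i by auto
      thus ?thesis using P4[OF a an an1 loc _ _ _ t(1) t(2)] ni i by auto
    qed
  qed
  obtain y where y: "y \<in> {1..r} \<rightarrow> carrier M" "spans y {1..r}" "indep y {1..r}" "\<forall>i\<in>{1..j}. y i = z i"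
    using extend_basis[OF eb zP jr a modind loc one_not_mult_a[OF a an an1]] by blast
  have yb: "is_basis R M y r" using y is_basis_iff by auto
  have split: "{1..r} = {1..j} \<union> {Suc j..r}" using jr by auto
  have yj: "y \<in> {1..j} \<rightarrow> carrier M" "y \<in> {Suc j..r} \<rightarrow> carrier M" using y(1) jr by auto
  have char: "lc M c y {1..r} \<in> lin_span R M x j \<longleftrightarrow>
            (\<forall>i\<in>{1..r}. \<exists>t\<in>carrier R. c i = a [^] (n - (if i \<le> j then ni i else 0)) \<otimes> t)"
    if c: "c \<in> {1..r} \<rightarrow> carrier R" for c
  proof
    assume H: "\<forall>i\<in>{1..r}. \<exists>t\<in>carrier R. c i = a [^] (n - (if i \<le> j then ni i else 0)) \<otimes> t"
    have "\<forall>i\<in>{1..j}. \<exists>t\<in>carrier R. c i = a [^] (n - ni i) \<otimes> t"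
    proof
      fix i assume i: "i \<in> {1..j}"
      hence "i \<in> {1..r}" "i \<le> j" using jr by auto
      thus "\<exists>t\<in>carrier R. c i = a [^] (n - ni i) \<otimes> t" using H by fastforce
    qed
    then obtain tt where tt: "\<forall>i\<in>{1..j}. tt i \<in> carrier R \<and> c i = a [^] (n - ni i) \<otimes> tt i" by metis
    have ttP: "tt \<in> {1..j} \<rightarrow> carrier R" using tt by auto
    have c0: "\<forall>i\<in>{Suc j..r}. c i = \<zero>"
    proof
      fix i assume i: "i \<in> {Suc j..r}"
      hence i': "i \<in> {1..r}" "\<not> i \<le> j" using jr by auto
      then obtain t where t: "t \<in> carrier R" "c i = a [^] (n - (if i \<le> j then ni i else 0)) \<otimes> t"
        using H by blast
      hence "c i = a [^] n \<otimes> t" using i'(2) by simp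
      thus "c i = \<zero>" using an t(1) by simp
    qed
    have "lc M c y {1..r} = lc M c y {1..j} \<oplus>\<^bsub>M\<^esub> lc M c y {Suc j..r}"
      using c y(1) jr by (subst split, subst lc_Un) (auto simp: Pi_iff)
    also have "lc M c y {Suc j..r} = \<zero>\<^bsub>M\<^esub>" using c0 yj by (intro lc_zero) auto
    also have "lc M c y {1..j} = lc M tt x {1..j}"
    proof (rule lc_cong)
      fix i assume i: "i \<in> {1..j}"
      have "c i \<odot>\<^bsub>M\<^esub> y i = (a [^] (n - ni i) \<otimes> tt i) \<odot>\<^bsub>M\<^esub> z i" using tt y(4) i by auto
      also have "\<dots> = (tt i \<otimes> a [^] (n - ni i)) \<odot>\<^bsub>M\<^esub> z i" using tt i a by (simp add: R.m_comm)
      also have "\<dots> = tt i \<odot>\<^bsub>M\<^esub> x i" using tt z i a by (simp add: smult_assoc1)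
      finally show "c i \<odot>\<^bsub>M\<^esub> y i = tt i \<odot>\<^bsub>M\<^esub> x i" .
    qed (use ttP x in auto)
    finally have "lc M c y {1..r} = lc M tt x {1..j}" using ttP x by simp
    thus "lc M c y {1..r} \<in> lin_span R M x j" using ttP unfolding lin_span_def lc_def by blast
  next
    assume "lc M c y {1..r} \<in> lin_span R M x j"
    then obtain d where d: "d \<in> {1..j} \<rightarrow> carrier R" "lc M c y {1..r} = lc M d x {1..j}"
      unfolding lin_span_def lc_def by blast
    define c' where "c' = (\<lambda>i. if i \<le> j then d i \<otimes> a [^] (n - ni i) else \<zero>)"
    have c': "c' \<in> {1..r} \<rightarrow> carrier R" using d a unfolding c'_def by (auto simp: Pi_iff)
    have "lc M c' y {1..r} = lc M c' y {1..j} \<oplus>\<^bsub>M\<^esub> lc M c' y {Suc j..r}"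
      using c' y(1) jr by (subst split, subst lc_Un) (auto simp: Pi_iff)
    also have "lc M c' y {Suc j..r} = \<zero>\<^bsub>M\<^esub>" using yj by (intro lc_zero) (auto simp: c'_def)
    also have "lc M c' y {1..j} = lc M d x {1..j}"
    proof (rule lc_cong)
      fix i assume i: "i \<in> {1..j}"
      have di: "d i \<in> carrier R" using d i by auto
      have "c' i \<odot>\<^bsub>M\<^esub> y i = (d i \<otimes> a [^] (n - ni i)) \<odot>\<^bsub>M\<^esub> z i" using y(4) i by (auto simp: c'_def)
      also have "\<dots> = d i \<odot>\<^bsub>M\<^esub> x i" using di z i a by (simp add: smult_assoc1)
      finally show "c' i \<odot>\<^bsub>M\<^esub> y i = d i \<odot>\<^bsub>M\<^esub> x i" .
    qed (use d x in auto)
    finally have "lc M c' y {1..r} = lc M c y {1..r}" using d x by simp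
    hence "lc M (\<lambda>i. c i \<ominus> c' i) y {1..r} = \<zero>\<^bsub>M\<^esub>"
      using c c' y(1) by (subst lc_diff) (simp_all add: a_minus_def M.r_neg)
    moreover have "(\<lambda>i. c i \<ominus> c' i) \<in> {1..r} \<rightarrow> carrier R" using c c' by (auto simp: Pi_iff)
    ultimately have "\<forall>i\<in>{1..r}. c i \<ominus> c' i = \<zero>" using y(3) unfolding indep_def by blast
    hence ceq: "\<forall>i\<in>{1..r}. c i = c' i" using c c' by (auto simp: Pi_iff R.r_right_minus_eq)
    show "\<forall>i\<in>{1..r}. \<exists>t\<in>carrier R. c i = a [^] (n - (if i \<le> j then ni i else 0)) \<otimes> t"
    proof
      fix i assume i: "i \<in> {1..r}"
      show "\<exists>t\<in>carrier R. c i = a [^] (n - (if i \<le> j then ni i else 0)) \<otimes> t"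
      proof (cases "i \<le> j")
        case True
        have di: "d i \<in> carrier R" using d i True by auto
        have "c i = a [^] (n - ni i) \<otimes> d i" using ceq i True di a by (simp add: c'_def R.m_comm)
        thus ?thesis using True di by auto
      next
        case False
        have "c i = a [^] (n - 0) \<otimes> \<zero>" using ceq i False a by (simp add: c'_def)
        thus ?thesis using False by auto
      qed
    qed
  qed
  show ?thesis using yb char by blast
qed

end



context principal_domain begin

lemma pow_nonzero: "p \<in> carrier R \<Longrightarrow> p \<noteq> \<zero> \<Longrightarrow> p [^] (k::nat) \<noteq> \<zero>"
  by (induction k) (auto simp: integral_iff)

lemma PIdl_mem: "x \<in> PIdl a \<longleftrightarrow> (\<exists>s\<in>carrier R. x = s \<otimes> a)"
  unfolding cgenideal_def by auto

lemma rcos_eq_iff: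
  assumes I: "ideal I R" and d: "d \<in> carrier R" and e: "e \<in> carrier R"
  shows "I +> d = I +> e \<longleftrightarrow> d \<ominus> e \<in> I"
proof -
  interpret ideal I R by (rule I)
  have "I +> d = I +> e \<longleftrightarrow> d \<in> I +> e"
    using d e a_repr_independenceD a_repr_independence' by (metis a_rcos_self)
  also have "\<dots> \<longleftrightarrow> d \<ominus> e \<in> I" using d e by (simp add: a_rcos_module_minus[OF ring_axioms])
  finally show ?thesis .
qed

lemma rcos_zero_iff:
  assumes I: "ideal I R" and d: "d \<in> carrier R"
  shows "I +> d = I \<longleftrightarrow> d \<in> I"
proof -
  interpret ideal I R by (rule I)
  have "I +> \<zero> = I" by (simp add: a_rcos_const)
  hence "I +> d = I \<longleftrightarrow> I +> d = I +> \<zero>" by simp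
  also have "\<dots> \<longleftrightarrow> d \<ominus> \<zero> \<in> I" using rcos_eq_iff[OF I d] by simp
  finally show ?thesis using d by (simp add: a_minus_def)
qed

end


locale pdq = principal_domain +
  fixes p :: 'a and n :: nat
  assumes p: "p \<in> carrier R" and pr: "ring_prime p" and n1: "1 \<le> n"
begin

abbreviation "J \<equiv> PIdl (p [^] n)"
abbreviation "Q \<equiv> R Quot J"
abbreviation "\<pi> \<equiv> a_r_coset R J"
abbreviation "aa \<equiv> \<pi> p"

lemma p0: "p \<noteq> \<zero>" using pr unfolding ring_prime_def by auto
lemma pnu: "p \<notin> Units R" using pr unfolding ring_prime_def prime_def by auto

lemma idJ: "ideal J R" using p by (simp add: cgenideal_ideal)
lemma hom: "ring_hom_ring R Q \<pi>" using idJ by (rule ideal.rcos_ring_hom_ring)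
lemma cQ: "cring Q" using idJ is_cring by (rule ideal.quotient_is_cring)

sublocale h: ring_hom_ring R Q \<pi> by (rule hom)
sublocale Q: cring Q by (rule cQ)

lemma carrQ: "carrier Q = \<pi> ` carrier R"
  by (auto simp: FactRing_def A_RCOSETS_def RCOSETS_def a_r_coset_def)

lemma zeroQ: "\<zero>\<^bsub>Q\<^esub> = J" unfolding FactRing_def by simp

lemma pi_zero_iff: "d \<in> carrier R \<Longrightarrow> \<pi> d = \<zero>\<^bsub>Q\<^esub> \<longleftrightarrow> d \<in> J"
  using rcos_zero_iff[OF idJ] zeroQ by simp

lemma aa: "aa \<in> carrier Q" using p h.hom_closed by simp

lemma powQ: "\<pi> (p [^] (k::nat)) = aa [^]\<^bsub>Q\<^esub> k" using p h.hom_nat_pow by simp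

lemma an: "aa [^]\<^bsub>Q\<^esub> n = \<zero>\<^bsub>Q\<^esub>"
  using powQ[of n] pi_zero_iff[of "p [^] n"] p cgenideal_self[of "p [^] n"] by simp

lemma pow_split: "k \<le> n \<Longrightarrow> p [^] n = p [^] (n - k) \<otimes> p [^] k"
  using p by (simp add: nat_pow_mult)

lemma divJ:
  assumes k: "k \<le> n" and d: "d \<in> carrier R"
  shows "(\<exists>t\<in>carrier Q. \<pi> d = aa [^]\<^bsub>Q\<^esub> k \<otimes>\<^bsub>Q\<^esub> t) \<longleftrightarrow> d \<in> PIdl (p [^] k)"
proof
  assume "\<exists>t\<in>carrier Q. \<pi> d = aa [^]\<^bsub>Q\<^esub> k \<otimes>\<^bsub>Q\<^esub> t"
  then obtain s where s: "s \<in> carrier R" "\<pi> d = aa [^]\<^bsub>Q\<^esub> k \<otimes>\<^bsub>Q\<^esub> \<pi> s" using carrQ by auto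
  have pk: "p [^] k \<in> carrier R" using p by simp
  have "\<pi> d = \<pi> (p [^] k \<otimes> s)" using s pk powQ by simp
  hence "d \<ominus> p [^] k \<otimes> s \<in> J" by (rule iffD1[OF rcos_eq_iff[OF idJ d m_closed[OF pk s(1)]]])
  then obtain u where u: "u \<in> carrier R" "d \<ominus> p [^] k \<otimes> s = u \<otimes> p [^] n" unfolding cgenideal_def by auto
  have pnk: "p [^] (n - k) \<in> carrier R" using p by simp
  have "d = (d \<ominus> p [^] k \<otimes> s) \<oplus> p [^] k \<otimes> s" using d pk s by (simp add: a_minus_def a_assoc l_neg)
  also have "\<dots> = u \<otimes> p [^] n \<oplus> p [^] k \<otimes> s" using u(2) by simp
  also have "u \<otimes> p [^] n = (u \<otimes> p [^] (n - k)) \<otimes> p [^] k"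
    using pow_split[OF k] u(1) pk pnk by (simp add: m_assoc)
  also have "(u \<otimes> p [^] (n - k)) \<otimes> p [^] k \<oplus> p [^] k \<otimes> s = (u \<otimes> p [^] (n - k) \<oplus> s) \<otimes> p [^] k"
    using u(1) pk pnk s(1) by (simp add: l_distr r_distr m_comm)
  finally show "d \<in> PIdl (p [^] k)" unfolding cgenideal_def using u s pnk by blast
next
  assume "d \<in> PIdl (p [^] k)"
  then obtain s where s: "s \<in> carrier R" "d = s \<otimes> p [^] k" unfolding cgenideal_def by auto
  have "\<pi> d = \<pi> s \<otimes>\<^bsub>Q\<^esub> aa [^]\<^bsub>Q\<^esub> k" using s p powQ by simp
  also have "\<dots> = aa [^]\<^bsub>Q\<^esub> k \<otimes>\<^bsub>Q\<^esub> \<pi> s" using s aa by (simp add: Q.m_comm)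
  finally show "\<exists>t\<in>carrier Q. \<pi> d = aa [^]\<^bsub>Q\<^esub> k \<otimes>\<^bsub>Q\<^esub> t" using s by auto
qed

lemma an1: "aa [^]\<^bsub>Q\<^esub> (n - 1) \<noteq> \<zero>\<^bsub>Q\<^esub>"
proof
  assume "aa [^]\<^bsub>Q\<^esub> (n - 1) = \<zero>\<^bsub>Q\<^esub>"
  hence "\<pi> (p [^] (n - 1)) = \<zero>\<^bsub>Q\<^esub>" using powQ by simp
  hence "p [^] (n - 1) \<in> J" using pi_zero_iff[of "p [^] (n - 1)"] p by simp
  then obtain s where s: "s \<in> carrier R" "p [^] (n - 1) = s \<otimes> p [^] n" unfolding cgenideal_def by auto
  have q: "p [^] (n - 1) \<in> carrier R" using p by simp
  have "p [^] n = p [^] (n - 1) \<otimes> p" using p n1 by (metis nat_pow_Suc Suc_diff_le diff_Suc_1)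
  hence "p [^] (n - 1) \<otimes> \<one> = s \<otimes> (p [^] (n - 1) \<otimes> p)" using s q p by simp
  also have "\<dots> = p [^] (n - 1) \<otimes> (s \<otimes> p)" using s q p by (simp add: m_lcomm)
  finally have "p [^] (n - 1) \<otimes> \<one> = p [^] (n - 1) \<otimes> (s \<otimes> p)" .
  hence "\<one> = s \<otimes> p" by (rule iffD1[OF m_lcancel[OF pow_nonzero[OF p p0] q one_closed m_closed[OF s(1) p]]])
  hence "s \<otimes> p = \<one>" "p \<otimes> s = \<one>" using m_comm[OF s(1) p] by auto
  hence "p \<in> Units R" unfolding Units_def using s(1) p by blast
  thus False using pnu by simp
qed

lemma P3Q: "\<forall>k\<le>n. \<forall>c\<in>carrier Q. aa [^]\<^bsub>Q\<^esub> k \<otimes>\<^bsub>Q\<^esub> c = \<zero>\<^bsub>Q\<^esub> \<longrightarrow> (\<exists>t\<in>carrier Q. c = aa [^]\<^bsub>Q\<^esub> (n - k) \<otimes>\<^bsub>Q\<^esub> t)"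
proof (intro allI impI ballI)
  fix k c assume k: "k \<le> n" and c: "c \<in> carrier Q" and z: "aa [^]\<^bsub>Q\<^esub> k \<otimes>\<^bsub>Q\<^esub> c = \<zero>\<^bsub>Q\<^esub>"
  obtain d where d: "d \<in> carrier R" "c = \<pi> d" using c carrQ by auto
  have pk: "p [^] k \<in> carrier R" using p by simp
  have "\<pi> (p [^] k \<otimes> d) = \<pi> (p [^] k) \<otimes>\<^bsub>Q\<^esub> \<pi> d" using pk d h.hom_mult by simp
  hence "\<pi> (p [^] k \<otimes> d) = \<zero>\<^bsub>Q\<^esub>" using z d powQ by simp
  hence "p [^] k \<otimes> d \<in> J" by (rule iffD1[OF pi_zero_iff[OF m_closed[OF pk d(1)]]])
  then obtain u where u: "u \<in> carrier R" "p [^] k \<otimes> d = u \<otimes> p [^] n" unfolding cgenideal_def by auto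
  have pnk: "p [^] (n - k) \<in> carrier R" using p by simp
  have "p [^] k \<otimes> d = u \<otimes> (p [^] (n - k) \<otimes> p [^] k)" using u pow_split[OF k] by simp
  also have "\<dots> = p [^] k \<otimes> (u \<otimes> p [^] (n - k))" using u pk pnk by (simp add: m_lcomm m_comm)
  finally have "p [^] k \<otimes> d = p [^] k \<otimes> (u \<otimes> p [^] (n - k))" .
  hence "d = u \<otimes> p [^] (n - k)" by (rule iffD1[OF m_lcancel[OF pow_nonzero[OF p p0] pk d(1) m_closed[OF u(1) pnk]]])
  hence "d \<in> PIdl (p [^] (n - k))" unfolding cgenideal_def using u by blast
  thus "\<exists>t\<in>carrier Q. c = aa [^]\<^bsub>Q\<^esub> (n - k) \<otimes>\<^bsub>Q\<^esub> t" using divJ[of "n - k" d] d by auto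
qed


lemma bezout_p:
  assumes d: "d \<in> carrier R" and nd: "d \<notin> PIdl p"
  shows "\<exists>u\<in>carrier R. \<exists>v\<in>carrier R. \<one> = u \<otimes> p \<oplus> v \<otimes> d"
proof -
  have mx: "maximalideal (PIdl p) R"
    using irreducible_imp_maximalideal[OF p] primeness_condition[OF p] pr by simp
  let ?I = "PIdl p <+>\<^bsub>R\<^esub> PIdl d"
  have idI: "ideal ?I R" using add_ideals[OF cgenideal_ideal[OF p] cgenideal_ideal[OF d]] .
  have z1: "\<zero> \<in> PIdl d" unfolding cgenideal_def using d by (auto intro!: exI[of _ \<zero>])
  have z2: "\<zero> \<in> PIdl p" unfolding cgenideal_def using p by (auto intro!: exI[of _ \<zero>])
  have sub: "PIdl p \<subseteq> ?I"
  proof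
    fix x assume x: "x \<in> PIdl p"
    hence "x \<in> carrier R" unfolding cgenideal_def using p by auto
    hence "x = x \<oplus> \<zero>" by simp
    thus "x \<in> ?I" using x z1 unfolding set_add_def' by blast
  qed
  have sub2: "?I \<subseteq> carrier R" using additive_subgroup.a_subset[OF ideal.axioms(1)[OF idI]] .
  have dI: "d \<in> ?I"
  proof -
    have "d \<in> PIdl d" using cgenideal_self[OF d] .
    moreover have "d = \<zero> \<oplus> d" using d by simp
    ultimately show ?thesis using z2 unfolding set_add_def' by blast
  qed
  have "?I = PIdl p \<or> ?I = carrier R" using maximalideal.I_maximal[OF mx idI sub sub2] .
  hence "?I = carrier R" using dI nd by auto
  hence "\<one> \<in> ?I" by simp
  then obtain x y where xy: "x \<in> PIdl p" "y \<in> PIdl d" "\<one> = x \<oplus> y" unfolding set_add_def' by blast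
  then obtain u v where "u \<in> carrier R" "x = u \<otimes> p" "v \<in> carrier R" "y = v \<otimes> d"
    unfolding cgenideal_def by blast
  thus ?thesis using xy by blast
qed

lemma locQ: "\<forall>c\<in>carrier Q. c \<in> Units Q \<or> (\<exists>t\<in>carrier Q. c = aa \<otimes>\<^bsub>Q\<^esub> t)"
proof
  fix c assume c: "c \<in> carrier Q"
  obtain d where d: "d \<in> carrier R" "c = \<pi> d" using c carrQ by auto
  show "c \<in> Units Q \<or> (\<exists>t\<in>carrier Q. c = aa \<otimes>\<^bsub>Q\<^esub> t)"
  proof (cases "d \<in> PIdl p")
    case True
    then obtain s where s: "s \<in> carrier R" "d = s \<otimes> p" unfolding cgenideal_def by auto
    have "c = \<pi> s \<otimes>\<^bsub>Q\<^esub> aa" using d s p by simp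
    also have "\<dots> = aa \<otimes>\<^bsub>Q\<^esub> \<pi> s" using s aa by (simp add: Q.m_comm)
    finally show ?thesis using s by auto
  next
    case False
    then obtain u1 v1 where uv1: "u1 \<in> carrier R" "v1 \<in> carrier R" "\<one> = u1 \<otimes> p \<oplus> v1 \<otimes> d"
      using bezout_p[OF d(1)] by blast
    have "\<forall>k::nat. \<exists>u\<in>carrier R. \<exists>v\<in>carrier R. \<one> = u \<otimes> p [^] k \<oplus> v \<otimes> d"
    proof
      fix k :: nat show "\<exists>u\<in>carrier R. \<exists>v\<in>carrier R. \<one> = u \<otimes> p [^] k \<oplus> v \<otimes> d"
      proof (induction k)
        case 0
        have "\<one> = \<one> \<otimes> p [^] (0::nat) \<oplus> \<zero> \<otimes> d" using d by simp
        thus ?case by blast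
      next
        case (Suc k)
        then obtain u v where uv: "u \<in> carrier R" "v \<in> carrier R" "\<one> = u \<otimes> p [^] k \<oplus> v \<otimes> d" by blast
        have pk: "p [^] k \<in> carrier R" using p by simp
        have "\<one> = u \<otimes> p [^] k \<otimes> \<one> \<oplus> v \<otimes> d" using uv(1,2) pk by (simp add: uv(3)[symmetric])
        also have "\<dots> = u \<otimes> p [^] k \<otimes> (u1 \<otimes> p \<oplus> v1 \<otimes> d) \<oplus> v \<otimes> d" using uv1 by simp
        also have "\<dots> = (u \<otimes> u1) \<otimes> (p [^] k \<otimes> p) \<oplus> (u \<otimes> p [^] k \<otimes> v1 \<oplus> v) \<otimes> d"
          using uv(1,2) uv1(1,2) pk p d(1) by algebra
        finally have "\<one> = (u \<otimes> u1) \<otimes> p [^] Suc k \<oplus> (u \<otimes> p [^] k \<otimes> v1 \<oplus> v) \<otimes> d" by simp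
        moreover have "u \<otimes> u1 \<in> carrier R" "u \<otimes> p [^] k \<otimes> v1 \<oplus> v \<in> carrier R" using uv uv1 pk by auto
        ultimately show ?case by blast
      qed
    qed
    then obtain u v where uv: "u \<in> carrier R" "v \<in> carrier R" "\<one> = u \<otimes> p [^] n \<oplus> v \<otimes> d" by blast
    have pn: "p [^] n \<in> carrier R" using p by simp
    have "\<one>\<^bsub>Q\<^esub> = \<pi> \<one>" by simp
    also have "\<dots> = \<pi> u \<otimes>\<^bsub>Q\<^esub> \<pi> (p [^] n) \<oplus>\<^bsub>Q\<^esub> \<pi> v \<otimes>\<^bsub>Q\<^esub> \<pi> d" using uv pn d by simp
    also have "\<pi> (p [^] n) = \<zero>\<^bsub>Q\<^esub>" using powQ an by simp
    finally have "\<one>\<^bsub>Q\<^esub> = \<pi> v \<otimes>\<^bsub>Q\<^esub> c" using uv d by simp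
    moreover have "c \<otimes>\<^bsub>Q\<^esub> \<pi> v = \<pi> v \<otimes>\<^bsub>Q\<^esub> c" using c uv by (simp add: Q.m_comm)
    ultimately have "c \<in> Units Q" unfolding Units_def using c uv(2) by force
    thus ?thesis by simp
  qed
qed

lemma quotI:
  assumes k: "k \<le> n"
  shows "quot_ideal R (PIdl (p [^] k)) J = {aa [^]\<^bsub>Q\<^esub> k \<otimes>\<^bsub>Q\<^esub> t | t. t \<in> carrier Q}"
proof
  show "quot_ideal R (PIdl (p [^] k)) J \<subseteq> {aa [^]\<^bsub>Q\<^esub> k \<otimes>\<^bsub>Q\<^esub> t | t. t \<in> carrier Q}"
  proof
    fix x assume "x \<in> quot_ideal R (PIdl (p [^] k)) J"
    then obtain d where d: "d \<in> PIdl (p [^] k)" "x = \<pi> d" unfolding quot_ideal_def by auto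
    have "d \<in> carrier R" using d p unfolding cgenideal_def by auto
    thus "x \<in> {aa [^]\<^bsub>Q\<^esub> k \<otimes>\<^bsub>Q\<^esub> t | t. t \<in> carrier Q}" using divJ[OF k] d by auto
  qed
next
  show "{aa [^]\<^bsub>Q\<^esub> k \<otimes>\<^bsub>Q\<^esub> t | t. t \<in> carrier Q} \<subseteq> quot_ideal R (PIdl (p [^] k)) J"
  proof
    fix x assume "x \<in> {aa [^]\<^bsub>Q\<^esub> k \<otimes>\<^bsub>Q\<^esub> t | t. t \<in> carrier Q}"
    then obtain t where t: "t \<in> carrier Q" "x = aa [^]\<^bsub>Q\<^esub> k \<otimes>\<^bsub>Q\<^esub> t" by auto
    obtain s where s: "s \<in> carrier R" "t = \<pi> s" using t carrQ by auto
    have pk: "p [^] k \<in> carrier R" using p by simp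
    have "x = \<pi> (p [^] k \<otimes> s)" using t s pk powQ by simp
    moreover have "p [^] k \<otimes> s \<in> PIdl (p [^] k)" unfolding cgenideal_def using s pk m_comm by blast
    ultimately show "x \<in> quot_ideal R (PIdl (p [^] k)) J" unfolding quot_ideal_def by blast
  qed
qed

end


context pdq begin

sublocale hc: ring_hom_cring R Q \<pi> using ideal.rcos_ring_hom_cring[OF idJ is_cring] .

lemma pi_minus: "d1 \<in> carrier R \<Longrightarrow> d2 \<in> carrier R \<Longrightarrow> \<pi> (d1 \<ominus> d2) = \<pi> d1 \<ominus>\<^bsub>Q\<^esub> \<pi> d2"
  unfolding a_minus_def by simp

lemma Kid: "ideal (PIdl (p [^] (k::nat))) R" using p by (simp add: cgenideal_ideal)

lemma JK: "k \<le> n \<Longrightarrow> J \<subseteq> PIdl (p [^] k)"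
proof
  fix x assume k: "k \<le> n" and "x \<in> J"
  then obtain s where s: "s \<in> carrier R" "x = s \<otimes> p [^] n" unfolding cgenideal_def by auto
  have "x = (s \<otimes> p [^] (n - k)) \<otimes> p [^] k" using s pow_split[OF k] p by (simp add: m_assoc)
  thus "x \<in> PIdl (p [^] k)" unfolding cgenideal_def using s p by blast
qed

lemma redK:
  assumes k: "k \<le> n" and d: "d \<in> carrier R"
  shows "PIdl (p [^] k) <+>\<^bsub>R\<^esub> \<pi> d = PIdl (p [^] k) +> d"
proof -
  let ?K = "PIdl (p [^] k)"
  interpret K: ideal ?K R by (rule Kid)
  interpret J: ideal J R by (rule idJ)
  have JK': "J \<subseteq> ?K" using JK[OF k] .
  show ?thesis
  proof
    show "?K <+>\<^bsub>R\<^esub> \<pi> d \<subseteq> ?K +> d"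
    proof
      fix z assume "z \<in> ?K <+>\<^bsub>R\<^esub> \<pi> d"
      then obtain u v w where uvw: "u \<in> ?K" "v \<in> J" "z = u \<oplus> (v \<oplus> d)"
        unfolding set_add_def' a_r_coset_def' by blast
      have uc: "u \<in> carrier R" "v \<in> carrier R" using uvw K.a_subset J.a_subset by auto
      have "z = (u \<oplus> v) \<oplus> d" using uvw uc d by (simp add: a_assoc)
      moreover have "u \<oplus> v \<in> ?K" using uvw JK' K.a_closed by auto
      ultimately show "z \<in> ?K +> d" unfolding a_r_coset_def' by blast
    qed
  next
    show "?K +> d \<subseteq> ?K <+>\<^bsub>R\<^esub> \<pi> d"
    proof
      fix z assume "z \<in> ?K +> d"
      then obtain u where u: "u \<in> ?K" "z = u \<oplus> d" unfolding a_r_coset_def' by blast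
      have "z = u \<oplus> (\<zero> \<oplus> d)" using u d by simp
      moreover have "\<zero> \<oplus> d \<in> \<pi> d" unfolding a_r_coset_def' using J.zero_closed by blast
      ultimately show "z \<in> ?K <+>\<^bsub>R\<^esub> \<pi> d" using u unfolding set_add_def' by blast
    qed
  qed
qed

lemma carr_quot: "carrier (R Quot I) = {I +> d | d. d \<in> carrier R}"
  by (auto simp: FactRing_def A_RCOSETS_def RCOSETS_def a_r_coset_def)


lemma final:
  fixes M :: "('a set, 'm, 'd) module_scheme" and e x :: "nat \<Rightarrow> 'm" and ni :: "nat \<Rightarrow> nat"
  assumes mod: "module Q M" and eb: "is_basis Q M e r" and jr: "j \<le> r"
    and x: "\<forall>i\<in>{1..j}. x i \<in> carrier M" and dir: "sum_is_direct Q M x j"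
    and nin: "\<forall>i\<in>{1..j}. ni i \<le> n"
    and annq: "\<forall>i\<in>{1..j}. Ann Q M (x i) = quot_ideal R (PIdl (p [^] ni i)) J"
    and annc: "\<forall>i\<in>{1..j}. Ann Q M (x i) \<noteq> carrier Q"
  shows "quot_iso_dsum R J M (lin_span Q M x j) r (\<lambda>i. PIdl (p [^] (n - (if i \<le> j then ni i else 0))))"
proof -
  interpret M: module Q M by (rule mod)
  define nn where "nn i = (if i \<le> j then ni i else 0)" for i
  define K where "K i = PIdl (p [^] (n - nn i))" for i
  define N where "N = lin_span Q M x j"
  have ann: "\<forall>i\<in>{1..j}. Ann Q M (x i) = {aa [^]\<^bsub>Q\<^esub> ni i \<otimes>\<^bsub>Q\<^esub> t | t. t \<in> carrier Q}"
    using annq nin quotI by auto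
  have ni1: "\<forall>i\<in>{1..j}. 1 \<le> ni i \<and> ni i \<le> n"
  proof
    fix i assume i: "i \<in> {1..j}"
    have "ni i \<noteq> 0"
    proof
      assume "ni i = 0"
      hence "Ann Q M (x i) = {\<one>\<^bsub>Q\<^esub> \<otimes>\<^bsub>Q\<^esub> t | t. t \<in> carrier Q}" using ann i by simp
      also have "\<dots> = carrier Q" by force
      finally show False using annc i by simp
    qed
    thus "1 \<le> ni i \<and> ni i \<le> n" using nin i by auto
  qed
  obtain y where yb: "is_basis Q M y r" and char0: "\<forall>c\<in>{1..r}\<rightarrow>carrier Q. lc M c y {1..r} \<in> lin_span Q M x j \<longleftrightarrow>
            (\<forall>i\<in>{1..r}. \<exists>t\<in>carrier Q. c i = aa [^]\<^bsub>Q\<^esub> (n - (if i \<le> j then ni i else 0)) \<otimes>\<^bsub>Q\<^esub> t)"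
    using M.main_abstract[OF eb jr aa an an1 n1 locQ P3Q x dir ni1 ann] by blast
  have char: "\<And>c. c \<in> {1..r}\<rightarrow>carrier Q \<Longrightarrow> lc M c y {1..r} \<in> N \<longleftrightarrow>
            (\<forall>i\<in>{1..r}. \<exists>t\<in>carrier Q. c i = aa [^]\<^bsub>Q\<^esub> (n - nn i) \<otimes>\<^bsub>Q\<^esub> t)"
    using char0 unfolding N_def nn_def by blast
  have y: "y \<in> {1..r} \<rightarrow> carrier M" using yb M.is_basis_iff by auto
  have uniq: "\<forall>m\<in>carrier M. \<exists>!c. c \<in> {1..r} \<rightarrow>\<^sub>E carrier Q \<and> m = lc M c y {1..r}"
    using yb unfolding is_basis_def lc_def by blast
  define coef where "coef m = (THE c. c \<in> {1..r} \<rightarrow>\<^sub>E carrier Q \<and> m = lc M c y {1..r})" for m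
  have coef: "coef m \<in> {1..r} \<rightarrow>\<^sub>E carrier Q \<and> m = lc M (coef m) y {1..r}" if "m \<in> carrier M" for m
    using theI'[OF uniq[rule_format, OF that]] unfolding coef_def .
  have coef_eq: "coef m = c" if "m \<in> carrier M" "c \<in> {1..r} \<rightarrow>\<^sub>E carrier Q" "m = lc M c y {1..r}" for m c
    unfolding coef_def using the1_equality[OF uniq[rule_format, OF that(1)]] that by blast
  have coefP: "coef m \<in> {1..r} \<rightarrow> carrier Q" if "m \<in> carrier M" for m using coef[OF that] by auto
  have nnle: "n - nn i \<le> n" for i by simp
  have repr: "\<exists>d\<in>carrier R. C = \<pi> d" if "C \<in> carrier Q" for C using that carrQ by auto
  define f where "f m = (\<lambda>i\<in>{1..r}. K i <+>\<^bsub>R\<^esub> coef m i)" for m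
  have fi: "f m i = K i +> d" if "i \<in> {1..r}" "coef m i = \<pi> d" "d \<in> carrier R" for m i d
    using redK[OF nnle that(3)] that unfolding f_def K_def by simp
  have fP: "f m \<in> PiE {1..r} (\<lambda>i. carrier (R Quot K i))" if m: "m \<in> carrier M" for m
  proof
    fix i assume i: "i \<in> {1..r}"
    obtain d where d: "d \<in> carrier R" "coef m i = \<pi> d" using repr coefP[OF m] i by blast
    show "f m i \<in> carrier (R Quot K i)" using fi[OF i d(2,1)] d carr_quot by auto
  next
    fix i assume "i \<notin> {1..r}" thus "f m i = undefined" unfolding f_def by auto
  qed
  have feq: "f m1 = f m2 \<longleftrightarrow> m1 \<ominus>\<^bsub>M\<^esub> m2 \<in> N" if m1: "m1 \<in> carrier M" and m2: "m2 \<in> carrier M" for m1 m2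
  proof -
    let ?c = "\<lambda>i. coef m1 i \<ominus>\<^bsub>Q\<^esub> coef m2 i"
    have cP: "?c \<in> {1..r} \<rightarrow> carrier Q" using coefP[OF m1] coefP[OF m2] by (auto simp: Pi_iff)
    have "lc M ?c y {1..r} = lc M (coef m1) y {1..r} \<ominus>\<^bsub>M\<^esub> lc M (coef m2) y {1..r}"
      using coefP[OF m1] coefP[OF m2] y(1) by (intro M.lc_diff) auto
    also have "\<dots> = m1 \<ominus>\<^bsub>M\<^esub> m2" using coef[OF m1] coef[OF m2] by simp
    finally have lcc: "lc M ?c y {1..r} = m1 \<ominus>\<^bsub>M\<^esub> m2" .
    have "m1 \<ominus>\<^bsub>M\<^esub> m2 \<in> N \<longleftrightarrow> (\<forall>i\<in>{1..r}. \<exists>t\<in>carrier Q. ?c i = aa [^]\<^bsub>Q\<^esub> (n - nn i) \<otimes>\<^bsub>Q\<^esub> t)"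
      using char[OF cP] lcc by simp
    also have "\<dots> \<longleftrightarrow> (\<forall>i\<in>{1..r}. f m1 i = f m2 i)"
    proof (intro ball_cong refl)
      fix i assume i: "i \<in> {1..r}"
      obtain d1 where d1: "d1 \<in> carrier R" "coef m1 i = \<pi> d1" using repr coefP[OF m1] i by blast
      obtain d2 where d2: "d2 \<in> carrier R" "coef m2 i = \<pi> d2" using repr coefP[OF m2] i by blast
      have "?c i = \<pi> (d1 \<ominus> d2)" using d1 d2 pi_minus by simp
      hence "(\<exists>t\<in>carrier Q. ?c i = aa [^]\<^bsub>Q\<^esub> (n - nn i) \<otimes>\<^bsub>Q\<^esub> t) \<longleftrightarrow> d1 \<ominus> d2 \<in> K i"
        using divJ[OF nnle, of "d1 \<ominus> d2" i] d1 d2 unfolding K_def by simp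
      also have "\<dots> \<longleftrightarrow> K i +> d1 = K i +> d2" using rcos_eq_iff[OF Kid d1(1) d2(1)] unfolding K_def by simp
      also have "\<dots> \<longleftrightarrow> f m1 i = f m2 i" using fi[OF i d1(2,1)] fi[OF i d2(2,1)] by simp
      finally show "(\<exists>t\<in>carrier Q. ?c i = aa [^]\<^bsub>Q\<^esub> (n - nn i) \<otimes>\<^bsub>Q\<^esub> t) \<longleftrightarrow> f m1 i = f m2 i" .
    qed
    also have "\<dots> \<longleftrightarrow> f m1 = f m2" unfolding f_def by (auto simp: fun_eq_iff restrict_def)
    finally show ?thesis by simp
  qed
  have fadd: "f (m1 \<oplus>\<^bsub>M\<^esub> m2) = (\<lambda>i\<in>{1..r}. f m1 i <+>\<^bsub>R\<^esub> f m2 i)" if m1: "m1 \<in> carrier M" and m2: "m2 \<in> carrier M" for m1 m2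
  proof -
    let ?c = "\<lambda>i\<in>{1..r}. coef m1 i \<oplus>\<^bsub>Q\<^esub> coef m2 i"
    have cP: "?c \<in> {1..r} \<rightarrow>\<^sub>E carrier Q" using coefP[OF m1] coefP[OF m2] by (auto simp: Pi_iff)
    have "lc M ?c y {1..r} = lc M (\<lambda>i. coef m1 i \<oplus>\<^bsub>Q\<^esub> coef m2 i) y {1..r}"
      using coefP[OF m1] coefP[OF m2] y(1) by (intro M.lc_restrict) (auto simp: Pi_iff)
    also have "\<dots> = lc M (coef m1) y {1..r} \<oplus>\<^bsub>M\<^esub> lc M (coef m2) y {1..r}"
      using coefP[OF m1] coefP[OF m2] y(1) by (intro M.lc_add) auto
    also have "\<dots> = m1 \<oplus>\<^bsub>M\<^esub> m2" using coef[OF m1] coef[OF m2] by simp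
    finally have "coef (m1 \<oplus>\<^bsub>M\<^esub> m2) = ?c" using m1 m2 cP by (intro coef_eq) auto
    show ?thesis
    proof
      fix i show "f (m1 \<oplus>\<^bsub>M\<^esub> m2) i = (\<lambda>i\<in>{1..r}. f m1 i <+>\<^bsub>R\<^esub> f m2 i) i"
      proof (cases "i \<in> {1..r}")
        case i: True
        obtain d1 where d1: "d1 \<in> carrier R" "coef m1 i = \<pi> d1" using repr coefP[OF m1] i by blast
        obtain d2 where d2: "d2 \<in> carrier R" "coef m2 i = \<pi> d2" using repr coefP[OF m2] i by blast
        have "coef (m1 \<oplus>\<^bsub>M\<^esub> m2) i = \<pi> (d1 \<oplus> d2)" using \<open>coef (m1 \<oplus>\<^bsub>M\<^esub> m2) = ?c\<close> i d1 d2 by simp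
        hence "f (m1 \<oplus>\<^bsub>M\<^esub> m2) i = K i +> (d1 \<oplus> d2)" using fi[OF i] d1 d2 by simp
        also have "\<dots> = (K i +> d1) <+>\<^bsub>R\<^esub> (K i +> d2)"
        proof -
          interpret KI: ideal "K i" R unfolding K_def by (rule Kid)
          show ?thesis using KI.a_rcos_sum[OF d1(1) d2(1)] by simp
        qed
        also have "\<dots> = f m1 i <+>\<^bsub>R\<^esub> f m2 i" using fi[OF i d1(2,1)] fi[OF i d2(2,1)] by simp
        finally show ?thesis using i by simp
      next
        case False thus ?thesis unfolding f_def by auto
      qed
    qed
  qed
  have fsmult: "f (\<pi> d \<odot>\<^bsub>M\<^esub> m) = (\<lambda>i\<in>{1..r}. rcoset_mult R (K i) (K i +> d) (f m i))"
    if d: "d \<in> carrier R" and m: "m \<in> carrier M" for d m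
  proof -
    have pd: "\<pi> d \<in> carrier Q" using d by simp
    let ?c = "\<lambda>i\<in>{1..r}. \<pi> d \<otimes>\<^bsub>Q\<^esub> coef m i"
    have cP: "?c \<in> {1..r} \<rightarrow>\<^sub>E carrier Q" using coefP[OF m] pd by (auto simp: Pi_iff)
    have "lc M ?c y {1..r} = lc M (\<lambda>i. \<pi> d \<otimes>\<^bsub>Q\<^esub> coef m i) y {1..r}"
      using coefP[OF m] pd y(1) by (intro M.lc_restrict) (auto simp: Pi_iff)
    also have "\<dots> = \<pi> d \<odot>\<^bsub>M\<^esub> lc M (coef m) y {1..r}"
      using coefP[OF m] pd y(1) by (intro M.lc_smult[symmetric]) auto
    also have "\<dots> = \<pi> d \<odot>\<^bsub>M\<^esub> m" using coef[OF m] by simp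
    finally have ce: "coef (\<pi> d \<odot>\<^bsub>M\<^esub> m) = ?c" using m pd cP by (intro coef_eq) auto
    show ?thesis
    proof
      fix i show "f (\<pi> d \<odot>\<^bsub>M\<^esub> m) i = (\<lambda>i\<in>{1..r}. rcoset_mult R (K i) (K i +> d) (f m i)) i"
      proof (cases "i \<in> {1..r}")
        case i: True
        obtain d1 where d1: "d1 \<in> carrier R" "coef m i = \<pi> d1" using repr coefP[OF m] i by blast
        have "coef (\<pi> d \<odot>\<^bsub>M\<^esub> m) i = \<pi> (d \<otimes> d1)" using ce i d d1 by simp
        hence "f (\<pi> d \<odot>\<^bsub>M\<^esub> m) i = K i +> (d \<otimes> d1)" using fi[OF i] d d1 by simp
        also have "\<dots> = rcoset_mult R (K i) (K i +> d) (K i +> d1)"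
        proof -
          interpret KI: ideal "K i" R unfolding K_def by (rule Kid)
          show ?thesis using KI.rcoset_mult_add[OF d d1(1)] by simp
        qed
        also have "\<dots> = rcoset_mult R (K i) (K i +> d) (f m i)" using fi[OF i d1(2,1)] by simp
        finally show ?thesis using i by simp
      next
        case False thus ?thesis unfolding f_def by auto
      qed
    qed
  qed
  have fsurj: "\<exists>m\<in>carrier M. f m = g" if g: "g \<in> PiE {1..r} (\<lambda>i. carrier (R Quot K i))" for g
  proof -
    have "\<forall>i\<in>{1..r}. \<exists>d\<in>carrier R. g i = K i +> d"
    proof
      fix i assume i: "i \<in> {1..r}"
      have "g i \<in> carrier (R Quot K i)" using g i by (auto simp: PiE_iff)
      thus "\<exists>d\<in>carrier R. g i = K i +> d" unfolding carr_quot by blast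
    qed
    then obtain dd where dd: "\<forall>i\<in>{1..r}. dd i \<in> carrier R \<and> g i = K i +> dd i" by metis
    let ?c = "\<lambda>i\<in>{1..r}. \<pi> (dd i)"
    have cP: "?c \<in> {1..r} \<rightarrow>\<^sub>E carrier Q" using dd by auto
    let ?m = "lc M ?c y {1..r}"
    have m: "?m \<in> carrier M" using cP y(1) by (intro M.lc_closed) auto
    have ce: "coef ?m = ?c" using m cP by (intro coef_eq) auto
    have "f ?m = g"
    proof
      fix i show "f ?m i = g i"
      proof (cases "i \<in> {1..r}")
        case i: True
        have "coef ?m i = \<pi> (dd i)" using ce i by simp
        thus ?thesis using fi[OF i] dd i by simp
      next
        case False thus ?thesis using g unfolding f_def by (auto simp: PiE_iff extensional_def)
      qed
    qed
    thus ?thesis using m by blast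
  qed
  have Nsg: "subgroup N (add_monoid M)"
  proof (rule M.add.subgroupI)
    show "N \<subseteq> carrier M" unfolding N_def lin_span_def
      using x by (auto intro!: M.finsum_closed simp: Pi_iff)
    have "(\<lambda>i. \<zero>\<^bsub>Q\<^esub>) \<in> {1..j} \<rightarrow> carrier Q" by auto
    thus "N \<noteq> {}" unfolding N_def lin_span_def by blast
  next
    fix u assume "u \<in> N"
    then obtain d where d: "d \<in> {1..j} \<rightarrow> carrier Q" "u = lc M d x {1..j}" unfolding N_def lin_span_def lc_def by blast
    have "\<ominus>\<^bsub>M\<^esub> u = lc M (\<lambda>i. \<ominus>\<^bsub>Q\<^esub> d i) x {1..j}" using d x by (simp add: M.lc_neg)
    moreover have "(\<lambda>i. \<ominus>\<^bsub>Q\<^esub> d i) \<in> {1..j} \<rightarrow> carrier Q" using d by auto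
    ultimately have "\<exists>c. \<ominus>\<^bsub>M\<^esub> u = lc M c x {1..j} \<and> c \<in> {1..j} \<rightarrow> carrier Q" by blast
    thus "\<ominus>\<^bsub>M\<^esub> u \<in> N" unfolding N_def lin_span_def lc_def by simp
  next
    fix u v assume "u \<in> N" "v \<in> N"
    then obtain d1 d2 where d: "d1 \<in> {1..j} \<rightarrow> carrier Q" "u = lc M d1 x {1..j}" "d2 \<in> {1..j} \<rightarrow> carrier Q" "v = lc M d2 x {1..j}"
      unfolding N_def lin_span_def lc_def by blast
    have "u \<oplus>\<^bsub>M\<^esub> v = lc M (\<lambda>i. d1 i \<oplus>\<^bsub>Q\<^esub> d2 i) x {1..j}" using d x by (simp add: M.lc_add)
    moreover have "(\<lambda>i. d1 i \<oplus>\<^bsub>Q\<^esub> d2 i) \<in> {1..j} \<rightarrow> carrier Q" using d by auto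
    ultimately have "\<exists>c. u \<oplus>\<^bsub>M\<^esub> v = lc M c x {1..j} \<and> c \<in> {1..j} \<rightarrow> carrier Q" by blast
    thus "u \<oplus>\<^bsub>M\<^esub> v \<in> N" unfolding N_def lin_span_def lc_def by simp
  qed
  interpret NA: abelian_subgroup N M
    by (rule abelian_subgroupI3) (auto simp: additive_subgroup_def Nsg intro: M.abelian_group_axioms)
  define \<phi> where "\<phi> U = f (SOME m. m \<in> U)" for U
  have phi: "\<phi> (N +>\<^bsub>M\<^esub> m) = f m" if m: "m \<in> carrier M" for m
  proof -
    have "m \<in> N +>\<^bsub>M\<^esub> m" using NA.a_rcos_self[OF m] .
    hence s: "(SOME m'. m' \<in> N +>\<^bsub>M\<^esub> m) \<in> N +>\<^bsub>M\<^esub> m" by (rule someI)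
    let ?m' = "SOME m'. m' \<in> N +>\<^bsub>M\<^esub> m"
    have m': "?m' \<in> carrier M" using NA.a_elemrcos_carrier[OF m s] .
    have "?m' \<oplus>\<^bsub>M\<^esub> \<ominus>\<^bsub>M\<^esub> m \<in> N" using NA.a_rcos_module_imp[OF m s] .
    hence "f ?m' = f m" using feq[OF m' m] by (simp add: a_minus_def)
    thus ?thesis unfolding \<phi>_def by simp
  qed
  have rc: "\<exists>m\<in>carrier M. U = N +>\<^bsub>M\<^esub> m" if "U \<in> A_RCOSETS M N" for U
    using that unfolding A_RCOSETS_def RCOSETS_def a_r_coset_def by auto
  have rcI: "N +>\<^bsub>M\<^esub> m \<in> A_RCOSETS M N" if "m \<in> carrier M" for m
    using that unfolding A_RCOSETS_def RCOSETS_def a_r_coset_def by auto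
  have Keq: "K = (\<lambda>i. PIdl (p [^] (n - (if i \<le> j then ni i else 0))))" unfolding K_def nn_def by auto
  have "quot_iso_dsum R J M N r K"
    unfolding quot_iso_dsum_def
  proof (intro exI conjI ballI)
    show "bij_betw \<phi> (A_RCOSETS M N) (PiE {1..r} (\<lambda>i. carrier (R Quot K i)))"
      unfolding bij_betw_def
    proof
      show "inj_on \<phi> (A_RCOSETS M N)"
      proof
        fix U V assume U: "U \<in> A_RCOSETS M N" and V: "V \<in> A_RCOSETS M N" and e: "\<phi> U = \<phi> V"
        obtain m1 where m1: "m1 \<in> carrier M" "U = N +>\<^bsub>M\<^esub> m1" using rc[OF U] by blast
        obtain m2 where m2: "m2 \<in> carrier M" "V = N +>\<^bsub>M\<^esub> m2" using rc[OF V] by blast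
        have "f m1 = f m2" using e phi m1 m2 by simp
        hence "m1 \<oplus>\<^bsub>M\<^esub> \<ominus>\<^bsub>M\<^esub> m2 \<in> N" using feq[OF m1(1) m2(1)] by (simp add: a_minus_def)
        hence "m1 \<in> N +>\<^bsub>M\<^esub> m2" using NA.a_rcos_module_rev[OF m2(1) m1(1)] by simp
        hence "N +>\<^bsub>M\<^esub> m2 = N +>\<^bsub>M\<^esub> m1" using NA.a_repr_independence'[OF _ m2(1)] by simp
        thus "U = V" using m1 m2 by simp
      qed
    next
      show "\<phi> ` A_RCOSETS M N = PiE {1..r} (\<lambda>i. carrier (R Quot K i))"
      proof
        show "\<phi> ` A_RCOSETS M N \<subseteq> PiE {1..r} (\<lambda>i. carrier (R Quot K i))"
        proof
          fix g assume "g \<in> \<phi> ` A_RCOSETS M N"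
          then obtain U where U: "U \<in> A_RCOSETS M N" "g = \<phi> U" by blast
          obtain m where m: "m \<in> carrier M" "U = N +>\<^bsub>M\<^esub> m" using rc[OF U(1)] by blast
          show "g \<in> PiE {1..r} (\<lambda>i. carrier (R Quot K i))" using U m phi fP by simp
        qed
      next
        show "PiE {1..r} (\<lambda>i. carrier (R Quot K i)) \<subseteq> \<phi> ` A_RCOSETS M N"
        proof
          fix g assume "g \<in> PiE {1..r} (\<lambda>i. carrier (R Quot K i))"
          then obtain m where m: "m \<in> carrier M" "f m = g" using fsurj by blast
          have "\<phi> (N +>\<^bsub>M\<^esub> m) = g" using phi[OF m(1)] m(2) by simp
          thus "g \<in> \<phi> ` A_RCOSETS M N" using rcI[OF m(1)] by force
        qed
      qed
    qed
  next
    fix U V assume U: "U \<in> A_RCOSETS M N" and V: "V \<in> A_RCOSETS M N"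
    obtain m1 where m1: "m1 \<in> carrier M" "U = N +>\<^bsub>M\<^esub> m1" using rc[OF U] by blast
    obtain m2 where m2: "m2 \<in> carrier M" "V = N +>\<^bsub>M\<^esub> m2" using rc[OF V] by blast
    have "set_add M U V = N +>\<^bsub>M\<^esub> (m1 \<oplus>\<^bsub>M\<^esub> m2)" using NA.a_rcos_sum[OF m1(1) m2(1)] m1 m2 by simp
    hence "\<phi> (set_add M U V) = f (m1 \<oplus>\<^bsub>M\<^esub> m2)" using phi m1 m2 by simp
    also have "\<dots> = (\<lambda>i\<in>{1..r}. f m1 i <+>\<^bsub>R\<^esub> f m2 i)" using fadd[OF m1(1) m2(1)] .
    finally show "\<phi> (set_add M U V) = (\<lambda>i\<in>{1..r}. ring.add (R Quot K i) (\<phi> U i) (\<phi> V i))"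
      using phi m1 m2 by (simp add: FactRing_def)
  next
    fix d m assume d: "d \<in> carrier R" and m: "m \<in> carrier M"
    have pm: "\<pi> d \<odot>\<^bsub>M\<^esub> m \<in> carrier M" using d m by simp
    show "\<phi> (N +>\<^bsub>M\<^esub> (\<pi> d \<odot>\<^bsub>M\<^esub> m)) = (\<lambda>i\<in>{1..r}. monoid.mult (R Quot K i) (K i +> d) (\<phi> (N +>\<^bsub>M\<^esub> m) i))"
      using phi[OF pm] phi[OF m] fsmult[OF d m] by (simp add: FactRing_def)
  qed
  thus ?thesis unfolding N_def Keq .
qed

end

theorem lemma11:
  fixes D :: "('a, 'b) ring_scheme" and \<alpha> :: 'a and n j r :: nat
    and M :: "('a set, 'm, 'd) module_scheme" and e x :: "nat \<Rightarrow> 'm" and ni :: "nat \<Rightarrow> nat"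
  assumes "principal_domain D"
    and "\<alpha> \<in> carrier D" and "ring_prime\<^bsub>D\<^esub> \<alpha>"
    and "n \<ge> 1"
    and "1 \<le> j" and "j \<le> r"
    and "module (Dbar D \<alpha> n) M"
    and "is_basis (Dbar D \<alpha> n) M e r"
    and "\<forall>i\<in>{1..j}. x i \<in> carrier M"
    and "sum_is_direct (Dbar D \<alpha> n) M x j"
    and "\<forall>i\<in>{1..j}. ni i \<le> n"
    and "\<forall>i\<in>{1..j}. Ann (Dbar D \<alpha> n) M (x i)
            = quot_ideal D (PIdl\<^bsub>D\<^esub> (\<alpha> [^]\<^bsub>D\<^esub> ni i)) (PIdl\<^bsub>D\<^esub> (\<alpha> [^]\<^bsub>D\<^esub> n))"
    and "\<forall>i\<in>{1..j}. Ann (Dbar D \<alpha> n) M (x i) \<noteq> carrier (Dbar D \<alpha> n)"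
  shows "quot_iso_dsum D (PIdl\<^bsub>D\<^esub> (\<alpha> [^]\<^bsub>D\<^esub> n)) M (lin_span (Dbar D \<alpha> n) M x j) r
           (\<lambda>i. PIdl\<^bsub>D\<^esub> (\<alpha> [^]\<^bsub>D\<^esub> (n - (if i \<le> j then ni i else 0))))"
  proof -
  interpret P: pdq D \<alpha> n
    by (rule pdq.intro[OF assms(1) pdq_axioms.intro[OF assms(2,3,4)]])
  show ?thesis unfolding Dbar_def
    using P.final[OF assms(7)[unfolded Dbar_def] assms(8)[unfolded Dbar_def] assms(6) assms(9)
        assms(10)[unfolded Dbar_def] assms(11) assms(12)[unfolded Dbar_def] assms(13)[unfolded Dbar_def]] .
qed

end
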